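(* Let $\mathcal{S}$, $\mathcal{V}$, $\mathcal{Y}$ be standard Borel spaces, let $\mathcal{G}$ be a compact group acting measurably on $\mathcal{S}\times\mathcal{V}$, let $\mathcal{M}$ be a Borel space, and let $(S,V,Y)$ be random elements of $\mathcal{S}\times\mathcal{V}\times\mathcal{Y}$ such that the conditional distribution $P(Y\mid S,V)$ is $\mathcal{G}$-invariant. Then any invariant sufficient representation $M:\mathcal{S}\times\mathcal{V}\to\mathcal{M}$ under $\mathcal{G}$ is an adequate statistic of $(S,V)$ for $Y$.
   Context: A map $M:\mathcal{S}\times\mathcal{V}\to\mathcal{M}$ is an invariant sufficient representation under $\mathcal{G}$ if for all $(s_1,v_1),(s_2,v_2)$: $M(s_1,v_1)=M(s_2,v_2)$ if and only if $(s_2,v_2)=g\cdot(s_1,v_1)$ for some $g\in\mathcal{G}$. $P(Y\mid S,V)$ is $\mathcal{G}$-invariant if $P(Y\in\cdot\mid (S,V)=(s,v))=P(Y\in\cdot\mid (S,V)=g\cdot(s,v))$ for all $g\in\mathcal{G}$ and all $(s,v)$. A measurable map $M$ is a sufficient statistic for $P(S,V)$ if there is a Markov kernel $k$ from $\mathcal{M}$ to $\mathcal{S}\times\mathcal{V}$ such that $P((S,V)\in\cdot\mid M(S,V)=m)=k(\cdot,m)$ for all $m\in\mathcal{M}$. $M$ is an adequate statistic of $(S,V)$ for $Y$ if it is sufficient for $P(S,V)$ and, for all $s,v$, $P(Y\in\cdot\mid S=s,V=v)=P(Y\in\cdot\mid M(S,V)=M(s,v))$, i.e. $Y$ is conditionally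 independent of $(S,V)$ given $M(S,V)$. *)

theory Defs
  imports "HOL-Probability.Probability" "HOL-Algebra.Group_Action"
begin

definition borel_of :: "'a topology \<Rightarrow> 'a measure" where
  "borel_of T = sigma (topspace T) {U. openin T U}"

definition Polish_space :: "'a topology \<Rightarrow> bool" where
  "Polish_space T \<longleftrightarrow> completely_metrizable_space T \<and> separable_space T"

definition standard_borel :: "'a measure \<Rightarrow> bool" where
  "standard_borel M \<longleftrightarrow>
     (\<exists>T. Polish_space T \<and> topspace T = space M \<and> sets M = sets (borel_of T))"

definition compact_topological_group :: "('g, 'b) monoid_scheme \<Rightarrow> 'g topology \<Rightarrow> bool" where
  "compact_topological_group G T \<longleftrightarrow>
     group G \<and> topspace T = carrier G \<and> compact_space T \<and> Hausdorff_space T \<and>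
     continuous_map (prod_topology T T) T (\<lambda>(g, h). g \<otimes>\<^bsub>G\<^esub> h) \<and>
     continuous_map T T (\<lambda>g. inv\<^bsub>G\<^esub> g)"

definition measurable_group_action ::
  "('g, 'b) monoid_scheme \<Rightarrow> 'g topology \<Rightarrow> 'x measure \<Rightarrow> ('g \<Rightarrow> 'x \<Rightarrow> 'x) \<Rightarrow> bool" where
  "measurable_group_action G T X \<phi> \<longleftrightarrow>
     group_action G (space X) \<phi> \<and>
     (\<lambda>(g, x). \<phi> g x) \<in> measurable (borel_of T \<Otimes>\<^sub>M X) X"

definition cond_distr ::
  "'a measure \<Rightarrow> 'x measure \<Rightarrow> 'y measure \<Rightarrow> ('a \<Rightarrow> 'x) \<Rightarrow> ('a \<Rightarrow> 'y) \<Rightarrow> ('x \<Rightarrow> 'y measure) \<Rightarrow> bool" where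
  "cond_distr P MX MY X Y \<kappa> \<longleftrightarrow>
     \<kappa> \<in> measurable MX (prob_algebra MY) \<and>
     (\<forall>A\<in>sets MX. \<forall>B\<in>sets MY.
        emeasure P {\<omega> \<in> space P. X \<omega> \<in> A \<and> Y \<omega> \<in> B}
          = (\<integral>\<^sup>+ x. indicator A x * emeasure (\<kappa> x) B \<partial>distr P MX X))"

definition G_invariant_kernel ::
  "('g, 'b) monoid_scheme \<Rightarrow> 'x measure \<Rightarrow> ('g \<Rightarrow> 'x \<Rightarrow> 'x) \<Rightarrow> ('x \<Rightarrow> 'y measure) \<Rightarrow> bool" where
  "G_invariant_kernel G X \<phi> \<kappa> \<longleftrightarrow>
     (\<forall>g\<in>carrier G. \<forall>x\<in>space X. \<kappa> x = \<kappa> (\<phi> g x))"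

text \<open>Invariant sufficient representation (maximal invariant): M(x1) = M(x2) iff x2 = g.x1.\<close>
definition invariant_sufficient_rep ::
  "('g, 'b) monoid_scheme \<Rightarrow> 'x measure \<Rightarrow> 'm measure \<Rightarrow> ('g \<Rightarrow> 'x \<Rightarrow> 'x) \<Rightarrow> ('x \<Rightarrow> 'm) \<Rightarrow> bool" where
  "invariant_sufficient_rep G X MM \<phi> M \<longleftrightarrow>
     M \<in> measurable X MM \<and>
     (\<forall>x1\<in>space X. \<forall>x2\<in>space X. M x1 = M x2 \<longleftrightarrow> (\<exists>g\<in>carrier G. x2 = \<phi> g x1))"

text \<open>M is a sufficient statistic for the distribution of the random element Z
  (values in X): there is a Markov kernel k from MM to X which is a version of
  P(Z \<in> . | M(Z) = m).\<close>
definition sufficient_statistic ::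
  "'a measure \<Rightarrow> 'x measure \<Rightarrow> 'm measure \<Rightarrow> ('a \<Rightarrow> 'x) \<Rightarrow> ('x \<Rightarrow> 'm) \<Rightarrow> bool" where
  "sufficient_statistic P X MM Z M \<longleftrightarrow>
     M \<in> measurable X MM \<and> (\<exists>k. cond_distr P MM X (\<lambda>\<omega>. M (Z \<omega>)) Z k)"

text \<open>M is an adequate statistic of Z for Y, relative to the version kappa of P(Y | Z):
  sufficient, and kappa(z) = P(Y \<in> . | M(Z) = M(z)) for every z, i.e. there is a
  version q of P(Y | M(Z)) with kappa z = q (M z) for all z.\<close>
definition adequate_statistic ::
  "'a measure \<Rightarrow> 'x measure \<Rightarrow> 'y measure \<Rightarrow> 'm measure \<Rightarrow> ('a \<Rightarrow> 'x) \<Rightarrow> ('a \<Rightarrow> 'y)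
     \<Rightarrow> ('x \<Rightarrow> 'y measure) \<Rightarrow> ('x \<Rightarrow> 'm) \<Rightarrow> bool" where
  "adequate_statistic P X MY MM Z Y \<kappa> M \<longleftrightarrow>
     sufficient_statistic P X MM Z M \<and>
     (\<exists>q. cond_distr P MM MY (\<lambda>\<omega>. M (Z \<omega>)) Y q \<and> (\<forall>z\<in>space X. \<kappa> z = q (M z)))"

end

theory Submission
  imports Defs
begin

section \<open>Analytic sets via the Baire space\<close>

definition agree :: "nat \<Rightarrow> (nat \<Rightarrow> nat) \<Rightarrow> (nat \<Rightarrow> nat) \<Rightarrow> bool" where
  "agree n a b \<longleftrightarrow> (\<forall>i<n. a i = b i)"

definition pclosed :: "(nat \<Rightarrow> nat) set \<Rightarrow> bool" where
  "pclosed F \<longleftrightarrow> (\<forall>a. (\<forall>n. \<exists>b\<in>F. agree n a b) \<longrightarrow> a \<in> F)"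

definition pcont :: "(nat \<Rightarrow> nat) set \<Rightarrow> ((nat \<Rightarrow> nat) \<Rightarrow> 'a::metric_space) \<Rightarrow> bool" where
  "pcont F f \<longleftrightarrow> (\<forall>a\<in>F. \<forall>e>0. \<exists>n. \<forall>b\<in>F. agree n a b \<longrightarrow> dist (f b) (f a) < e)"

definition analytic :: "'a::metric_space set \<Rightarrow> bool" where
  "analytic A \<longleftrightarrow> (\<exists>F f. pclosed F \<and> pcont F f \<and> A = f ` F)"

lemma agree_sym: "agree n a b = agree n b a"
  unfolding agree_def by auto

lemma agree_mono: "agree n a b \<Longrightarrow> m \<le> n \<Longrightarrow> agree m a b"
  unfolding agree_def by auto

lemma agree_trans: "agree n a b \<Longrightarrow> agree n b c \<Longrightarrow> agree n a c"
  unfolding agree_def by auto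

lemma analytic_empty: "analytic {}"
  unfolding analytic_def pclosed_def pcont_def by (rule exI[of _ "{}"]) auto

lemma analytic_image:
  assumes "analytic A" "continuous_on A g"
  shows "analytic (g ` A)"
proof -
  obtain F f where F: "pclosed F" "pcont F f" "A = f ` F"
    using assms(1) unfolding analytic_def by blast
  have "pcont F (g \<circ> f)"
    unfolding pcont_def
  proof (intro ballI allI impI)
    fix a e assume a: "a \<in> F" and e: "(e::real) > 0"
    have "f a \<in> A" using a F(3) by auto
    then obtain d where d: "d > 0" "\<And>y. y \<in> A \<Longrightarrow> dist y (f a) < d \<Longrightarrow> dist (g y) (g (f a)) < e"
      using assms(2) e unfolding continuous_on_iff by metis
    obtain n where n: "\<And>b. b \<in> F \<Longrightarrow> agree n a b \<Longrightarrow> dist (f b) (f a) < d"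
      using F(2) a d(1) unfolding pcont_def by metis
    show "\<exists>n. \<forall>b\<in>F. agree n a b \<longrightarrow> dist ((g \<circ> f) b) ((g \<circ> f) a) < e"
      using n d(2) F(3) by (intro exI[of _ n]) auto
  qed
  then show ?thesis using F unfolding analytic_def by (intro exI[of _ F] exI[of _ "g \<circ> f"]) (auto simp: image_comp)
qed

definition stl :: "(nat \<Rightarrow> nat) \<Rightarrow> (nat \<Rightarrow> nat)" where "stl a = (\<lambda>k. a (Suc k))"

lemma analytic_UN:
  fixes A :: "nat \<Rightarrow> 'a::metric_space set"
  assumes "\<And>i. analytic (A i)"
  shows "analytic (\<Union>i. A i)"
proof -
  obtain Fs fs where Fs: "\<And>i. pclosed (Fs i)" "\<And>i. pcont (Fs i) (fs i :: _ \<Rightarrow> 'a)" "\<And>i. A i = fs i ` Fs i"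
    using assms unfolding analytic_def by metis
  define F where "F = {a. stl a \<in> Fs (a 0)}"
  define f where "f a = fs (a 0) (stl a)" for a
  have agS: "agree (Suc n) a b \<Longrightarrow> a 0 = b 0 \<and> agree n (stl a) (stl b)" for n a b
    unfolding agree_def stl_def by auto
  have "pclosed F"
    unfolding pclosed_def
  proof (intro allI impI)
    fix a assume h: "\<forall>n. \<exists>b\<in>F. agree n a b"
    have "\<exists>b\<in>Fs (a 0). agree n (stl a) b" for n
    proof -
      obtain b where "b \<in> F" "agree (Suc n) a b" using h by blast
      then show ?thesis using agS[of n a b] unfolding F_def by auto
    qed
    then show "a \<in> F" using Fs(1)[of "a 0"] unfolding pclosed_def F_def by auto
  qed
  moreover have "pcont F f"
    unfolding pcont_def
  proof (intro ballI allI impI)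
    fix a e assume a: "a \<in> F" and e: "(e::real) > 0"
    obtain n where n: "\<And>b. b \<in> Fs (a 0) \<Longrightarrow> agree n (stl a) b \<Longrightarrow> dist (fs (a 0) b) (fs (a 0) (stl a)) < e"
      using Fs(2)[of "a 0"] a e unfolding pcont_def F_def by blast
    show "\<exists>n. \<forall>b\<in>F. agree n a b \<longrightarrow> dist (f b) (f a) < e"
    proof (rule exI[of _ "Suc n"], intro ballI impI)
      fix b assume b: "b \<in> F" "agree (Suc n) a b"
      then have "b 0 = a 0" "agree n (stl a) (stl b)" using agS[of n a b] by auto
      then show "dist (f b) (f a) < e" using n b(1) unfolding F_def f_def by auto
    qed
  qed
  moreover have "(\<Union>i. A i) = f ` F"
  proof
    show "f ` F \<subseteq> (\<Union>i. A i)" using Fs(3) by (auto simp: F_def f_def)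
    show "(\<Union>i. A i) \<subseteq> f ` F"
    proof
      fix x assume "x \<in> (\<Union>i. A i)"
      then obtain i c where c: "c \<in> Fs i" "x = fs i c" using Fs(3) by auto
      define a where "a k = (case k of 0 \<Rightarrow> i | Suc k \<Rightarrow> c k)" for k
      have "stl a = c" "a 0 = i" by (auto simp: a_def stl_def)
      then show "x \<in> f ` F" using c by (auto simp: F_def f_def intro!: image_eqI[of _ _ a])
    qed
  qed
  ultimately show ?thesis unfolding analytic_def by blast
qed

definition pr :: "nat \<Rightarrow> (nat \<Rightarrow> nat) \<Rightarrow> (nat \<Rightarrow> nat)" where
  "pr n a = (\<lambda>k. a (prod_encode (n, k)))"

lemma triangle_mono': "a \<le> b \<Longrightarrow> triangle a \<le> triangle b"
  unfolding triangle_def by (intro div_le_mono mult_le_mono) auto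

lemma prod_encode_less: "prod_encode (n, k) < prod_encode (n, L)" if "k < L"
proof -
  have "triangle (n + k) < triangle (n + L)"
  proof -
    have "triangle (Suc (n + k)) \<le> triangle (n + L)" using that by (intro triangle_mono') auto
    then show ?thesis by simp
  qed
  then show ?thesis unfolding prod_encode_def by simp
qed

lemma agree_pr: "agree (prod_encode (n, L)) a b \<Longrightarrow> agree L (pr n a) (pr n b)"
  unfolding agree_def pr_def using prod_encode_less by auto

lemma analytic_INT:
  fixes A :: "nat \<Rightarrow> 'a::metric_space set"
  assumes "\<And>i. analytic (A i)"
  shows "analytic (\<Inter>i. A i)"
proof -
  obtain Fs fs where Fs: "\<And>i. pclosed (Fs i)" "\<And>i. pcont (Fs i) (fs i :: _ \<Rightarrow> 'a)" "\<And>i. A i = fs i ` Fs i"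
    using assms unfolding analytic_def by metis
  define F where "F = {a. \<forall>n. pr n a \<in> Fs n \<and> fs n (pr n a) = fs 0 (pr 0 a)}"
  define f where "f a = fs 0 (pr 0 a)" for a
  have "pclosed F"
    unfolding pclosed_def
  proof (intro allI impI)
    fix a assume h: "\<forall>n. \<exists>b\<in>F. agree n a b"
    have inF: "pr n a \<in> Fs n" for n
    proof -
      have "\<exists>b\<in>Fs n. agree L (pr n a) b" for L
      proof -
        obtain b where "b \<in> F" "agree (prod_encode (n, L)) a b" using h by blast
        then show ?thesis using agree_pr[of n L a b] unfolding F_def by auto
      qed
      then show ?thesis using Fs(1)[of n] unfolding pclosed_def by auto
    qed
    have eq: "fs n (pr n a) = fs 0 (pr 0 a)" for n
    proof (rule ccontr)
      assume ne: "fs n (pr n a) \<noteq> fs 0 (pr 0 a)"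
      define e where "e = dist (fs n (pr n a)) (fs 0 (pr 0 a)) / 2"
      have e: "e > 0" using ne by (simp add: e_def)
      obtain L1 where L1: "\<And>b. b \<in> Fs n \<Longrightarrow> agree L1 (pr n a) b \<Longrightarrow> dist (fs n b) (fs n (pr n a)) < e"
        using Fs(2)[of n] inF[of n] e unfolding pcont_def by (metis agree_sym)
      obtain L0 where L0: "\<And>b. b \<in> Fs 0 \<Longrightarrow> agree L0 (pr 0 a) b \<Longrightarrow> dist (fs 0 b) (fs 0 (pr 0 a)) < e"
        using Fs(2)[of 0] inF[of 0] e unfolding pcont_def by (metis agree_sym)
      obtain b where b: "b \<in> F" "agree (max (prod_encode (n, L1)) (prod_encode (0, L0))) a b"
        using h by blast
      have "agree L1 (pr n a) (pr n b)" "agree L0 (pr 0 a) (pr 0 b)"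
        using agree_pr agree_mono[OF b(2)] by auto
      then have d1: "dist (fs n (pr n b)) (fs n (pr n a)) < e" and d0: "dist (fs 0 (pr 0 b)) (fs 0 (pr 0 a)) < e"
        using L1 L0 b(1) unfolding F_def by auto
      have "fs n (pr n b) = fs 0 (pr 0 b)" using b(1) unfolding F_def by auto
      then have "dist (fs n (pr n a)) (fs 0 (pr 0 a)) < 2 * e"
        using d1 d0 dist_triangle[of "fs n (pr n a)" "fs 0 (pr 0 a)" "fs n (pr n b)"]
        by (simp add: dist_commute)
      then show False by (simp add: e_def)
    qed
    show "a \<in> F" using inF eq unfolding F_def by auto
  qed
  moreover have "pcont F f"
    unfolding pcont_def
  proof (intro ballI allI impI)
    fix a e assume a: "a \<in> F" and e: "(e::real) > 0"
    obtain L0 where L0: "\<And>b. b \<in> Fs 0 \<Longrightarrow> agree L0 (pr 0 a) b \<Longrightarrow> dist (fs 0 b) (fs 0 (pr 0 a)) < e"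
      using Fs(2)[of 0] a e unfolding pcont_def F_def by blast
    show "\<exists>n. \<forall>b\<in>F. agree n a b \<longrightarrow> dist (f b) (f a) < e"
      by (rule exI[of _ "prod_encode (0, L0)"]) (use L0 agree_pr in \<open>auto simp: F_def f_def\<close>)
  qed
  moreover have "(\<Inter>i. A i) = f ` F"
  proof
    show "f ` F \<subseteq> (\<Inter>i. A i)" using Fs(3) by (auto simp: F_def f_def) (metis image_eqI)
    show "(\<Inter>i. A i) \<subseteq> f ` F"
    proof
      fix x assume "x \<in> (\<Inter>i. A i)"
      then have "\<forall>i. \<exists>c. c \<in> Fs i \<and> x = fs i c" using Fs(3) by auto
      then obtain c where c: "\<And>i. c i \<in> Fs i" "\<And>i. x = fs i (c i)" by metis
      define a where "a m = c (fst (prod_decode m)) (snd (prod_decode m))" for m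
      have pa: "pr n a = c n" for n by (auto simp: a_def pr_def)
      then show "x \<in> f ` F" using c by (auto simp: F_def f_def intro!: image_eqI[of _ _ a])
    qed
  qed
  ultimately show ?thesis unfolding analytic_def by blast
qed

lemma geo_dist:
  fixes x :: "nat \<Rightarrow> 'a::metric_space"
  assumes "\<And>n. dist (x n) (x (Suc n)) \<le> (1/2)^n"
  shows "dist (x n) (x (n + k)) \<le> 2*(1/2)^n - 2*(1/2)^(n+k)"
proof (induction k)
  case 0 then show ?case by simp
next
  case (Suc k)
  have "dist (x n) (x (n + Suc k)) \<le> dist (x n) (x (n + k)) + dist (x (n+k)) (x (Suc (n+k)))"
    using dist_triangle by simp
  also have "\<dots> \<le> 2*(1/2)^n - 2*(1/2)^(n+k) + (1/2)^(n+k)" using Suc assms[of "n+k"] by linarith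
  also have "\<dots> = 2*(1/2)^n - 2*(1/2)^(n + Suc k)" by simp
  finally show ?case .
qed

lemma geo_dist':
  fixes x :: "nat \<Rightarrow> 'a::metric_space"
  assumes "\<And>n. dist (x n) (x (Suc n)) \<le> (1/2)^n" "n \<le> m"
  shows "dist (x n) (x m) \<le> 2*(1/2)^n"
proof -
  obtain k where "m = n + k" using assms(2) le_Suc_ex by blast
  then have "dist (x n) (x m) \<le> 2*(1/2)^n - 2*(1/2)^(n+k)" using geo_dist[OF assms(1), of n k] by simp
  moreover have "0 \<le> (1/2::real)^(n+k)" by simp
  ultimately show ?thesis by linarith
qed

lemma geo_seq:
  fixes x :: "nat \<Rightarrow> 'a::complete_space"
  assumes "\<And>n. dist (x n) (x (Suc n)) \<le> (1/2)^n"
  shows "\<exists>L. x \<longlonglongrightarrow> L \<and> (\<forall>n. dist (x n) L \<le> 2*(1/2)^n)"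
proof -
  have "Cauchy x"
    unfolding Cauchy_def
  proof (intro allI impI)
    fix e :: real assume e: "e > 0"
    obtain M where M: "(1/2::real)^M < e/4" using real_arch_pow_inv[of "e/4" "1/2"] e by auto
    show "\<exists>M. \<forall>m\<ge>M. \<forall>n\<ge>M. dist (x m) (x n) < e"
    proof (intro exI[of _ M] allI impI)
      fix m n assume "M \<le> m" "M \<le> n"
      then have "dist (x M) (x m) \<le> 2*(1/2)^M" "dist (x M) (x n) \<le> 2*(1/2)^M"
        using geo_dist'[OF assms] by auto
      then show "dist (x m) (x n) < e" using M dist_triangle[of "x m" "x n" "x M"]
        by (simp add: dist_commute)
    qed
  qed
  then obtain L where L: "x \<longlonglongrightarrow> L" using Cauchy_convergent convergent_def by blast
  have "dist (x n) L \<le> 2*(1/2)^n" for n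
  proof (rule LIMSEQ_le_const2)
    show "(\<lambda>m. dist (x n) (x m)) \<longlonglongrightarrow> dist (x n) L" by (intro tendsto_intros L)
    show "\<exists>N. \<forall>m\<ge>N. dist (x n) (x m) \<le> 2 * (1 / 2) ^ n" using geo_dist'[OF assms] by auto
  qed
  then show ?thesis using L by auto
qed

lemma analytic_closed:
  fixes C :: "'a::polish_space set"
  assumes "closed C"
  shows "analytic C"
proof (cases "C = {}")
  case True then show ?thesis by (simp add: analytic_empty)
next
  case False
  obtain T where T: "countable T" "T \<subseteq> C" "C \<subseteq> closure T" using separable by blast
  have "T \<noteq> {}" using False T(3) by auto
  define a where "a = from_nat_into T"
  have ra: "range a = T" using T(1) \<open>T \<noteq> {}\<close> by (simp add: a_def range_from_nat_into)
  define F where "F = {\<alpha>. \<forall>n. dist (a (\<alpha> n)) (a (\<alpha> (Suc n))) \<le> (1/2)^n}"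
  define f where "f \<alpha> = lim (\<lambda>n. a (\<alpha> n))" for \<alpha>
  have fF: "(\<lambda>n. a (\<alpha> n)) \<longlonglongrightarrow> f \<alpha> \<and> (\<forall>n. dist (a (\<alpha> n)) (f \<alpha>) \<le> 2*(1/2)^n)" if "\<alpha> \<in> F" for \<alpha>
  proof -
    have "\<And>n. dist (a (\<alpha> n)) (a (\<alpha> (Suc n))) \<le> (1/2)^n" using that unfolding F_def by auto
    from geo_seq[OF this] obtain L where L: "(\<lambda>n. a (\<alpha> n)) \<longlonglongrightarrow> L" "\<forall>n. dist (a (\<alpha> n)) L \<le> 2*(1/2)^n"
      by blast
    then show ?thesis unfolding f_def using limI[OF L(1)] by simp
  qed
  have "pclosed F"
    unfolding pclosed_def
  proof (intro allI impI)
    fix \<alpha> assume h: "\<forall>n. \<exists>b\<in>F. agree n \<alpha> b"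
    show "\<alpha> \<in> F" unfolding F_def
    proof (unfold mem_Collect_eq, intro allI)
      fix n
      obtain b where b: "b \<in> F" "agree (Suc (Suc n)) \<alpha> b" using h by blast
      then have "b n = \<alpha> n" "b (Suc n) = \<alpha> (Suc n)" unfolding agree_def by auto
      moreover have "dist (a (b n)) (a (b (Suc n))) \<le> (1/2)^n" using b(1) unfolding F_def by auto
      ultimately show "dist (a (\<alpha> n)) (a (\<alpha> (Suc n))) \<le> (1/2)^n" by simp
    qed
  qed
  moreover have "pcont F f"
    unfolding pcont_def
  proof (intro ballI allI impI)
    fix \<alpha> e assume \<alpha>: "\<alpha> \<in> F" and e: "(e::real) > 0"
    obtain N where N: "(1/2::real)^N < e/4" using real_arch_pow_inv[of "e/4" "1/2"] e by auto
    show "\<exists>n. \<forall>b\<in>F. agree n \<alpha> b \<longrightarrow> dist (f b) (f \<alpha>) < e"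
    proof (intro exI[of _ "Suc N"] ballI impI)
      fix b assume b: "b \<in> F" "agree (Suc N) \<alpha> b"
      then have eq: "b N = \<alpha> N" unfolding agree_def by auto
      have "dist (a (b N)) (f b) \<le> 2*(1/2)^N" "dist (a (\<alpha> N)) (f \<alpha>) \<le> 2*(1/2)^N"
        using fF b(1) \<alpha> by auto
      then show "dist (f b) (f \<alpha>) < e" using N eq dist_triangle[of "f b" "f \<alpha>" "a (\<alpha> N)"]
        by (simp add: dist_commute)
    qed
  qed
  moreover have "C = f ` F"
  proof
    show "f ` F \<subseteq> C"
    proof
      fix y assume "y \<in> f ` F"
      then obtain \<alpha> where "\<alpha> \<in> F" "y = f \<alpha>" by auto
      moreover have "a (\<alpha> n) \<in> C" for n using ra T(2) by auto
      moreover have "(\<lambda>n. a (\<alpha> n)) \<longlonglongrightarrow> f \<alpha>" using fF \<open>\<alpha> \<in> F\<close> by blast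
      ultimately show "y \<in> C" using closed_sequentially[OF assms, of "\<lambda>n. a (\<alpha> n)"] by auto
    qed
    show "C \<subseteq> f ` F"
    proof
      fix y assume y: "y \<in> C"
      have "\<forall>n. \<exists>i. dist (a i) y < (1/2)^(n+2)"
      proof
        fix n
        have "y \<in> closure T" using y T(3) by auto
        moreover have "(1/2::real)^(n+2) > 0" by simp
        ultimately obtain t where "t \<in> T" "dist t y < (1/2::real)^(n+2)"
          unfolding closure_approachable by blast
        moreover have "t \<in> range a" using \<open>t \<in> T\<close> ra by simp
        ultimately show "\<exists>i. dist (a i) y < (1/2)^(n+2)" by auto
      qed
      then have "\<exists>\<alpha>. \<forall>n. dist (a (\<alpha> n)) y < (1/2)^(n+2)" by (simp only: choice_iff)
      then obtain \<alpha> where \<alpha>: "\<And>n. dist (a (\<alpha> n)) y < (1/2)^(n+2)" by blast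
      have "\<alpha> \<in> F" unfolding F_def
      proof (unfold mem_Collect_eq, intro allI)
        fix n
        have "dist (a (\<alpha> n)) (a (\<alpha> (Suc n))) \<le> dist (a (\<alpha> n)) y + dist (a (\<alpha> (Suc n))) y"
          by (rule dist_triangle2)
        also have "\<dots> \<le> (1/2)^(n+2) + (1/2)^(Suc n+2)" using \<alpha>[of n] \<alpha>[of "Suc n"] by linarith
        also have "\<dots> \<le> (1/2)^n" by (simp add: power_add)
        finally show "dist (a (\<alpha> n)) (a (\<alpha> (Suc n))) \<le> (1/2)^n" .
      qed
      moreover have "(\<lambda>n. a (\<alpha> n)) \<longlonglongrightarrow> y"
      proof (rule tendstoI)
        fix e :: real assume e: "e > 0"
        obtain N where N: "(1/2::real)^N < e" using real_arch_pow_inv[of e "1/2"] e by auto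
        show "\<forall>\<^sub>F n in sequentially. dist (a (\<alpha> n)) y < e"
        proof (rule eventually_sequentiallyI[of N])
          fix n assume "N \<le> n"
          then have "(1/2::real)^(n+2) \<le> (1/2)^N" by (intro power_decreasing) auto
          then show "dist (a (\<alpha> n)) y < e" using \<alpha>[of n] N by linarith
        qed
      qed
      then have "f \<alpha> = y" unfolding f_def by (rule limI)
      ultimately show "y \<in> f ` F" by auto
    qed
  qed
  ultimately show ?thesis unfolding analytic_def by blast
qed

lemma analytic_open:
  fixes S :: "'a::polish_space set"
  assumes "open S"
  shows "analytic S"
proof (cases "S = UNIV")
  case True then show ?thesis using analytic_closed[of UNIV] by simp
next
  case False
  have ne: "- S \<noteq> {}" using False by auto
  have cl: "closed (- S)" using assms by auto
  have "S = (\<Union>n. {x. 1 / real (Suc n) \<le> infdist x (- S)})"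
  proof
    show "S \<subseteq> (\<Union>n. {x. 1 / real (Suc n) \<le> infdist x (- S)})"
    proof
      fix x assume x: "x \<in> S"
      then have pos: "infdist x (- S) > 0" using infdist_pos_not_in_closed[OF cl ne] by auto
      obtain n where "inverse (real (Suc n)) < infdist x (- S)" using reals_Archimedean[OF pos] by blast
      then have "1 / real (Suc n) < infdist x (- S)" by (simp add: inverse_eq_divide)
      then show "x \<in> (\<Union>n. {x. 1 / real (Suc n) \<le> infdist x (- S)})" by (auto intro!: less_imp_le)
    qed
    show "(\<Union>n. {x. 1 / real (Suc n) \<le> infdist x (- S)}) \<subseteq> S"
    proof
      fix x assume "x \<in> (\<Union>n. {x. 1 / real (Suc n) \<le> infdist x (- S)})"
      then obtain n where "1 / real (Suc n) \<le> infdist x (- S)" by auto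
      moreover have "0 < 1 / real (Suc n)" by simp
      ultimately have "infdist x (- S) \<noteq> 0" by linarith
      then show "x \<in> S" using infdist_zero[of x "- S"] by (cases "x \<in> S") auto
    qed
  qed
  moreover have "closed {x. 1 / real (Suc n) \<le> infdist x (- S)}" for n
    by (intro closed_Collect_le continuous_on_const continuous_on_infdist continuous_on_id)
  then have "analytic (\<Union>n. {x. 1 / real (Suc n) \<le> infdist x (- S)})"
    by (intro analytic_UN analytic_closed)
  ultimately show ?thesis by simp
qed

lemma analytic_borel:
  fixes B :: "'a::polish_space set"
  assumes "B \<in> sets borel"
  shows "analytic B"
proof -
  have "B \<in> sigma_sets UNIV {S. open S}" using assms by (simp add: sets_borel)
  then have "analytic B \<and> analytic (- B)"
  proof induction
    case (Basic a)
    then have "open a" by simp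
    then show ?case using analytic_open[of a] analytic_closed[of "- a"] by (simp add: closed_Compl)
  next
    case Empty
    then show ?case using analytic_empty analytic_closed[of UNIV] by simp
  next
    case (Compl a)
    then show ?case by (simp add: Compl_eq_Diff_UNIV[symmetric])
  next
    case (Union a)
    then show ?case using analytic_UN[of a] analytic_INT[of "\<lambda>i. - a i"] by (simp add: Compl_UN)
  qed
  then show ?thesis by simp
qed

definition sep :: "'a::metric_space set \<Rightarrow> 'a set \<Rightarrow> bool" where
  "sep X Y \<longleftrightarrow> (\<exists>D\<in>sets borel. X \<subseteq> D \<and> D \<inter> Y = {})"

lemma sep_empty: "sep {} Y"
  unfolding sep_def by (intro bexI[of _ "{}"]) auto

lemma sep_UN:
  fixes X Y :: "nat \<Rightarrow> 'a::metric_space set"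
  assumes "\<And>i j. sep (X i) (Y j)"
  shows "sep (\<Union>i. X i) (\<Union>j. Y j)"
proof -
  have ex: "\<exists>D. D \<in> sets borel \<and> X i \<subseteq> D \<and> D \<inter> Y j = {}" for i j using assms[of i j] unfolding sep_def by blast
  define D where "D i j = (SOME D. D \<in> sets borel \<and> X i \<subseteq> D \<and> D \<inter> Y j = {})" for i j
  have D: "\<And>i j. D i j \<in> sets borel" "\<And>i j. X i \<subseteq> D i j" "\<And>i j. D i j \<inter> Y j = {}"
    using someI_ex[OF ex] unfolding D_def by auto
  define E where "E = (\<Union>i. \<Inter>j. D i j)"
  have "E \<in> sets borel" unfolding E_def using D(1) by (intro sets.countable_UN sets.countable_INT) auto
  moreover have "(\<Union>i. X i) \<subseteq> E" using D(2) unfolding E_def by blast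
  moreover have "E \<inter> (\<Union>j. Y j) = {}" using D(3) unfolding E_def by blast
  ultimately show ?thesis unfolding sep_def by blast
qed

definition cyl :: "(nat \<Rightarrow> nat) set \<Rightarrow> (nat \<Rightarrow> nat) \<Rightarrow> nat \<Rightarrow> (nat \<Rightarrow> nat) set" where
  "cyl F s n = {a \<in> F. agree n a s}"

lemma cyl_split: "cyl F s n = (\<Union>i. cyl F (s(n := i)) (Suc n))"
proof
  show "cyl F s n \<subseteq> (\<Union>i. cyl F (s(n := i)) (Suc n))"
  proof
    fix a assume "a \<in> cyl F s n"
    then have "a \<in> cyl F (s(n := a n)) (Suc n)" unfolding cyl_def agree_def by (auto simp: less_Suc_eq)
    then show "a \<in> (\<Union>i. cyl F (s(n := i)) (Suc n))" by blast
  qed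
  show "(\<Union>i. cyl F (s(n := i)) (Suc n)) \<subseteq> cyl F s n"
    unfolding cyl_def agree_def by auto
qed

lemma sep_step:
  fixes f g :: "(nat \<Rightarrow> nat) \<Rightarrow> 'a::metric_space"
  assumes "\<not> sep (f ` cyl F s n) (g ` cyl G t n)"
  shows "\<exists>i j. \<not> sep (f ` cyl F (s(n := i)) (Suc n)) (g ` cyl G (t(n := j)) (Suc n))"
proof (rule ccontr)
  assume "\<not> ?thesis"
  then have "sep (\<Union>i. f ` cyl F (s(n := i)) (Suc n)) (\<Union>j. g ` cyl G (t(n := j)) (Suc n))"
    by (intro sep_UN) auto
  then have "sep (f ` cyl F s n) (g ` cyl G t n)"
    by (subst (1 2) cyl_split) (simp add: image_UN)
  then show False using assms by simp
qed

theorem lusin_separation: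
  fixes A B :: "'a::metric_space set"
  assumes "analytic A" "analytic B" "A \<inter> B = {}"
  shows "\<exists>D\<in>sets borel. A \<subseteq> D \<and> D \<inter> B = {}"
proof (rule ccontr)
  assume nsep0: "\<not> ?thesis"
  obtain F f where F: "pclosed F" "pcont F f" "A = f ` F"
    using assms(1) unfolding analytic_def by blast
  obtain G g where G: "pclosed G" "pcont G g" "B = g ` G"
    using assms(2) unfolding analytic_def by blast
  define NS where "NS n p \<longleftrightarrow> \<not> sep (f ` cyl F (fst p) n) (g ` cyl G (snd p) n)" for n p
  define nxt where "nxt n p = (SOME p'. \<exists>i j. p' = ((fst p)(n:=i), (snd p)(n:=j)) \<and> NS (Suc n) p')" for n p
  define sq where "sq = rec_nat ((\<lambda>_. 0, \<lambda>_. 0) :: (nat \<Rightarrow> nat) \<times> (nat \<Rightarrow> nat)) nxt"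
  have sq0: "sq 0 = (\<lambda>_. 0, \<lambda>_. 0)" and sqS: "sq (Suc n) = nxt n (sq n)" for n
    by (simp_all add: sq_def)
  have inv: "NS n (sq n) \<and> (\<exists>i j. sq (Suc n) = ((fst (sq n))(n:=i), (snd (sq n))(n:=j)))" for n
  proof (induction n)
    case 0
    have c0: "cyl H s 0 = H" for H s unfolding cyl_def agree_def by auto
    have NS0: "NS 0 (sq 0)" using nsep0 F(3) G(3) unfolding NS_def c0 sep_def by blast
    have "\<exists>p'. \<exists>i j. p' = ((fst (sq 0))(0:=i), (snd (sq 0))(0:=j)) \<and> NS (Suc 0) p'"
      using sep_step[of f F "fst (sq 0)" 0 g G "snd (sq 0)"] NS0 unfolding NS_def by auto
    from someI_ex[OF this] have "\<exists>i j. sq (Suc 0) = ((fst (sq 0))(0:=i), (snd (sq 0))(0:=j)) \<and> NS (Suc 0) (sq (Suc 0))"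
      unfolding sqS nxt_def by blast
    then show ?case using NS0 by blast
  next
    case (Suc n)
    then obtain i j where ij: "sq (Suc n) = ((fst (sq n))(n:=i), (snd (sq n))(n:=j))" by blast
    have step: "\<exists>p'. \<exists>i j. p' = ((fst (sq n))(n:=i), (snd (sq n))(n:=j)) \<and> NS (Suc n) p'"
      using sep_step[of f F "fst (sq n)" n g G "snd (sq n)"] Suc unfolding NS_def by auto
    from someI_ex[OF step] have NSs: "NS (Suc n) (sq (Suc n))"
      unfolding sqS nxt_def by blast
    have "\<exists>p'. \<exists>i j. p' = ((fst (sq (Suc n)))(Suc n:=i), (snd (sq (Suc n)))(Suc n:=j)) \<and> NS (Suc (Suc n)) p'"
      using sep_step[of f F "fst (sq (Suc n))" "Suc n" g G "snd (sq (Suc n))"] NSs unfolding NS_def by auto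
    from someI_ex[OF this] have "\<exists>i j. sq (Suc (Suc n)) = ((fst (sq (Suc n)))(Suc n:=i), (snd (sq (Suc n)))(Suc n:=j))"
      unfolding sqS[of "Suc n"] nxt_def by blast
    then show ?case using NSs by blast
  qed
  define \<alpha> where "\<alpha> k = fst (sq (Suc k)) k" for k
  define \<beta> where "\<beta> k = snd (sq (Suc k)) k" for k
  have stab: "k < m \<Longrightarrow> fst (sq m) k = \<alpha> k \<and> snd (sq m) k = \<beta> k" for k m
  proof (induction m)
    case 0 then show ?case by simp
  next
    case (Suc m)
    show ?case
    proof (cases "k = m")
      case True then show ?thesis by (simp add: \<alpha>_def \<beta>_def)
    next
      case False
      then have "k < m" using Suc by simp
      obtain i j where "sq (Suc m) = ((fst (sq m))(m:=i), (snd (sq m))(m:=j))" using inv by blast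
      then show ?thesis using Suc(1)[OF \<open>k < m\<close>] False by simp
    qed
  qed
  have agA: "agree n \<alpha> (fst (sq n))" "agree n \<beta> (snd (sq n))" for n
    using stab unfolding agree_def by auto
  have ne: "cyl F (fst (sq n)) n \<noteq> {} \<and> cyl G (snd (sq n)) n \<noteq> {}" for n
  proof -
    have "\<not> sep (f ` cyl F (fst (sq n)) n) (g ` cyl G (snd (sq n)) n)" using inv[of n] unfolding NS_def by simp
    moreover have "sep X {}" for X :: "'a set" unfolding sep_def by (intro bexI[of _ UNIV]) auto
    ultimately show ?thesis using sep_empty by fastforce
  qed
  have "\<alpha> \<in> F"
    using F(1) unfolding pclosed_def
  proof (elim allE impE)
    show "\<forall>n. \<exists>b\<in>F. agree n \<alpha> b"
    proof
      fix n
      obtain b where "b \<in> cyl F (fst (sq n)) n" using ne by blast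
      then have "b \<in> F" "agree n \<alpha> b" unfolding cyl_def using agA(1)[of n] unfolding agree_def by auto
      then show "\<exists>b\<in>F. agree n \<alpha> b" by blast
    qed
  qed
  have "\<beta> \<in> G"
    using G(1) unfolding pclosed_def
  proof (elim allE impE)
    show "\<forall>n. \<exists>b\<in>G. agree n \<beta> b"
    proof
      fix n
      obtain b where "b \<in> cyl G (snd (sq n)) n" using ne by blast
      then have "b \<in> G" "agree n \<beta> b" unfolding cyl_def using agA(2)[of n] unfolding agree_def by auto
      then show "\<exists>b\<in>G. agree n \<beta> b" by blast
    qed
  qed
  have "f \<alpha> \<noteq> g \<beta>" using assms(3) F(3) G(3) \<open>\<alpha> \<in> F\<close> \<open>\<beta> \<in> G\<close> by blast
  define e where "e = dist (f \<alpha>) (g \<beta>) / 2"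
  have e: "e > 0" using \<open>f \<alpha> \<noteq> g \<beta>\<close> by (simp add: e_def)
  obtain N1 where N1: "\<And>b. b \<in> F \<Longrightarrow> agree N1 \<alpha> b \<Longrightarrow> dist (f b) (f \<alpha>) < e"
    using F(2) \<open>\<alpha> \<in> F\<close> e unfolding pcont_def by blast
  obtain N2 where N2: "\<And>b. b \<in> G \<Longrightarrow> agree N2 \<beta> b \<Longrightarrow> dist (g b) (g \<beta>) < e"
    using G(2) \<open>\<beta> \<in> G\<close> e unfolding pcont_def by blast
  define N where "N = max N1 N2"
  have "sep (f ` cyl F (fst (sq N)) N) (g ` cyl G (snd (sq N)) N)"
    unfolding sep_def
  proof (intro bexI[of _ "ball (f \<alpha>) e"] conjI)
    show "ball (f \<alpha>) e \<in> sets borel" by simp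
    show "f ` cyl F (fst (sq N)) N \<subseteq> ball (f \<alpha>) e"
    proof
      fix y assume "y \<in> f ` cyl F (fst (sq N)) N"
      then obtain b where b: "b \<in> F" "agree N b (fst (sq N))" "y = f b" unfolding cyl_def by auto
      then have "agree N \<alpha> b" using agA(1)[of N] unfolding agree_def by auto
      then have "agree N1 \<alpha> b" using agree_mono N_def by auto
      then have "dist (f b) (f \<alpha>) < e" using N1 b by simp
      then show "y \<in> ball (f \<alpha>) e" using b(3) by (simp add: dist_commute)
    qed
    show "ball (f \<alpha>) e \<inter> g ` cyl G (snd (sq N)) N = {}"
    proof (rule ccontr)
      assume "ball (f \<alpha>) e \<inter> g ` cyl G (snd (sq N)) N \<noteq> {}"
      then obtain b where b: "b \<in> G" "agree N b (snd (sq N))" "dist (f \<alpha>) (g b) < e"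
        unfolding cyl_def by auto
      then have "agree N \<beta> b" using agA(2)[of N] unfolding agree_def by auto
      then have "agree N2 \<beta> b" using agree_mono N_def by auto
      then have "dist (g b) (g \<beta>) < e" using N2 b by simp
      then have "dist (f \<alpha>) (g \<beta>) < 2 * e" using b(3) dist_triangle[of "f \<alpha>" "g \<beta>" "g b"] by simp
      then show False by (simp add: e_def)
    qed
  qed
  then show False using inv[of N] unfolding NS_def by simp
qed

definition retr :: "'a measure \<Rightarrow> 'b measure \<Rightarrow> bool" where
  "retr A B \<longleftrightarrow> (\<exists>i r. i \<in> A \<rightarrow>\<^sub>M B \<and> r \<in> B \<rightarrow>\<^sub>M A \<and> (\<forall>x\<in>space A. r (i x) = x))"

lemma analytic_borel_image:
  fixes f :: "real \<Rightarrow> real"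
  assumes f: "f \<in> borel_measurable borel" and B: "B \<in> sets borel"
  shows "analytic (f ` B)"
proof -
  define \<Gamma> where "\<Gamma> = {p::real \<times> real. fst p \<in> B \<and> f (fst p) = snd p}"
  have "\<Gamma> \<in> sets (borel \<Otimes>\<^sub>M borel)"
  proof -
    have "\<Gamma> = {p \<in> space (borel \<Otimes>\<^sub>M borel). fst p \<in> B \<and> f (fst p) - snd p = 0}"
      unfolding \<Gamma>_def by (auto simp: space_pair_measure)
    also have "\<dots> \<in> sets (borel \<Otimes>\<^sub>M borel)" using f B by measurable
    finally show ?thesis .
  qed
  then have "\<Gamma> \<in> sets borel" by (metis borel_prod)
  then have "analytic \<Gamma>" by (rule analytic_borel)
  then have "analytic (snd ` \<Gamma>)" by (rule analytic_image) (intro continuous_intros)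
  moreover have "snd ` \<Gamma> = f ` B"
  proof
    show "snd ` \<Gamma> \<subseteq> f ` B" unfolding \<Gamma>_def by auto
    show "f ` B \<subseteq> snd ` \<Gamma>"
    proof
      fix y assume "y \<in> f ` B"
      then obtain a where "a \<in> B" "y = f a" by auto
      then have "(a, f a) \<in> \<Gamma>" "y = snd (a, f a)" unfolding \<Gamma>_def by auto
      then show "y \<in> snd ` \<Gamma>" by (rule rev_image_eqI)
    qed
  qed
  ultimately show ?thesis by simp
qed

lemma INF_rat_above:
  fixes y :: real
  shows "(\<Sqinter>c::rat. if y < of_rat c then ereal (of_rat c) else \<infinity>) = ereal y"
proof (rule INF_eqI)
  show "\<And>c. c \<in> UNIV \<Longrightarrow> ereal y \<le> (if y < of_rat c then ereal (of_rat c) else \<infinity>)" by auto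
  fix z assume z: "\<And>c. c \<in> UNIV \<Longrightarrow> z \<le> (if y < of_rat c then ereal (of_rat c) else \<infinity>)"
  show "z \<le> ereal y"
  proof (rule ccontr)
    assume "\<not> z \<le> ereal y"
    then have "ereal y < z" by simp
    then obtain r where r: "ereal y < ereal r" "ereal r < z" using ereal_dense2 by blast
    then have "y < r" by simp
    then obtain c where c: "y < of_rat c" "of_rat c < r" using of_rat_dense by blast
    have "z \<le> ereal (of_rat c)" using z[of c] c(1) by simp
    moreover have "ereal (of_rat c) < ereal r" using c(2) by simp
    then have "ereal (of_rat c) < z" using r(2) by (rule less_trans)
    ultimately show False by simp
  qed
qed

theorem factor_invariant:
  fixes X :: "'x measure" and MM :: "'m measure" and M :: "'x \<Rightarrow> 'm" and f :: "'x \<Rightarrow> real"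
  assumes rX: "retr X (borel :: real measure)" and rM: "retr MM (borel :: real measure)"
    and M: "M \<in> X \<rightarrow>\<^sub>M MM" and f: "f \<in> borel_measurable X"
    and inv: "\<And>x y. x \<in> space X \<Longrightarrow> y \<in> space X \<Longrightarrow> M x = M y \<Longrightarrow> f x = f y"
  shows "\<exists>h\<in>borel_measurable MM. \<forall>x\<in>space X. f x = h (M x)"
proof -
  obtain iX :: "'x \<Rightarrow> real" and rrX where iX: "iX \<in> X \<rightarrow>\<^sub>M borel" "rrX \<in> borel \<rightarrow>\<^sub>M X" "\<And>x. x \<in> space X \<Longrightarrow> rrX (iX x) = x"
    using rX unfolding retr_def by blast
  obtain iM :: "'m \<Rightarrow> real" and rrM where iM: "iM \<in> MM \<rightarrow>\<^sub>M borel" "rrM \<in> borel \<rightarrow>\<^sub>M MM" "\<And>x. x \<in> space MM \<Longrightarrow> rrM (iM x) = x"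
    using rM unfolding retr_def by blast
  define \<Phi> where "\<Phi> t = iM (M (rrX t))" for t
  have \<Phi>: "\<Phi> \<in> borel_measurable borel" unfolding \<Phi>_def
    by (intro measurable_compose[OF _ iM(1)] measurable_compose[OF iX(2) M])
  have rrXs: "rrX t \<in> space X" for t by (rule measurable_space[OF iX(2)]) simp
  have sepc: "\<exists>D. D \<in> sets MM \<and> (\<forall>x\<in>space X. M x \<in> D \<longleftrightarrow> f x < of_rat c)" for c
  proof -
    define U where "U = {t::real. f (rrX t) < of_rat c}"
    define V where "V = {t::real. \<not> f (rrX t) < of_rat c}"
    have U: "U \<in> sets borel" unfolding U_def using f iX(2) by measurable
    have V: "V \<in> sets borel" unfolding V_def using f iX(2) by measurable
    have "\<Phi> ` U \<inter> \<Phi> ` V = {}"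
    proof (rule ccontr)
      assume "\<Phi> ` U \<inter> \<Phi> ` V \<noteq> {}"
      then obtain t s where ts: "t \<in> U" "s \<in> V" "\<Phi> t = \<Phi> s" by auto
      have "M (rrX t) \<in> space MM" "M (rrX s) \<in> space MM" using measurable_space[OF M rrXs] by auto
      moreover have "rrM (iM (M (rrX t))) = rrM (iM (M (rrX s)))" using ts(3) unfolding \<Phi>_def by simp
      ultimately have "M (rrX t) = M (rrX s)" using iM(3) by simp
      then have "f (rrX t) = f (rrX s)" using inv rrXs by blast
      then show False using ts unfolding U_def V_def by simp
    qed
    then obtain D' where D': "D' \<in> sets borel" "\<Phi> ` U \<subseteq> D'" "D' \<inter> \<Phi> ` V = {}"
      using lusin_separation[OF analytic_borel_image[OF \<Phi> U] analytic_borel_image[OF \<Phi> V]] by blast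
    define D where "D = iM -` D' \<inter> space MM"
    have "D \<in> sets MM" unfolding D_def using iM(1) D'(1) by (rule measurable_sets)
    moreover have "M x \<in> D \<longleftrightarrow> f x < of_rat c" if x: "x \<in> space X" for x
    proof -
      have Mx: "M x \<in> space MM" using measurable_space[OF M x] .
      have eq: "\<Phi> (iX x) = iM (M x)" unfolding \<Phi>_def using iX(3)[OF x] by simp
      show ?thesis
      proof
        assume "M x \<in> D"
        then have "iM (M x) \<in> D'" unfolding D_def by simp
        then have "\<Phi> (iX x) \<in> D'" using eq by simp
        then have "iX x \<notin> V" using D'(3) by blast
        then show "f x < of_rat c" unfolding V_def using iX(3)[OF x] by simp
      next
        assume "f x < of_rat c"
        then have "iX x \<in> U" unfolding U_def using iX(3)[OF x] by simp
        then have "\<Phi> (iX x) \<in> D'" using D'(2) by blast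
        then have "iM (M x) \<in> D'" using eq by simp
        then show "M x \<in> D" unfolding D_def using Mx by simp
      qed
    qed
    ultimately show ?thesis by blast
  qed
  define D where "D c = (SOME D. D \<in> sets MM \<and> (\<forall>x\<in>space X. M x \<in> D \<longleftrightarrow> f x < of_rat c))" for c
  have D: "D c \<in> sets MM" "\<And>x. x \<in> space X \<Longrightarrow> M x \<in> D c \<longleftrightarrow> f x < of_rat c" for c
    using someI_ex[OF sepc[of c]] unfolding D_def by auto
  define H where "H m = (\<Sqinter>c::rat. if m \<in> D c then ereal (of_rat c) else \<infinity>)" for m
  define h where "h m = real_of_ereal (H m)" for m
  have "H \<in> borel_measurable MM"
    unfolding H_def using D(1) by (intro borel_measurable_INF) auto
  then have "h \<in> borel_measurable MM" unfolding h_def by measurable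
  moreover have "f x = h (M x)" if "x \<in> space X" for x
  proof -
    have "H (M x) = (\<Sqinter>c::rat. if f x < of_rat c then ereal (of_rat c) else \<infinity>)"
      unfolding H_def using D(2)[OF that] by simp
    then show ?thesis unfolding h_def INF_rat_above by simp
  qed
  ultimately show ?thesis by blast
qed

lemma retr_trans:
  assumes "retr A B" "retr B C" shows "retr A C"
proof -
  obtain i r where ir: "i \<in> A \<rightarrow>\<^sub>M B" "r \<in> B \<rightarrow>\<^sub>M A" "\<And>x. x \<in> space A \<Longrightarrow> r (i x) = x"
    using assms(1) unfolding retr_def by blast
  obtain j s where js: "j \<in> B \<rightarrow>\<^sub>M C" "s \<in> C \<rightarrow>\<^sub>M B" "\<And>x. x \<in> space B \<Longrightarrow> s (j x) = x"
    using assms(2) unfolding retr_def by blast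
  have "\<forall>x\<in>space A. (r \<circ> s) ((j \<circ> i) x) = x"
    using ir js measurable_space[OF ir(1)] by simp
  moreover have "j \<circ> i \<in> A \<rightarrow>\<^sub>M C" "r \<circ> s \<in> C \<rightarrow>\<^sub>M A"
    using ir js by (auto intro: measurable_comp)
  ultimately show ?thesis unfolding retr_def by blast
qed

lemma retr_refl: "retr A A"
  unfolding retr_def by (intro exI[of _ id]) auto

lemma retr_cong_sets:
  assumes "retr A B" "sets A = sets A'" "sets B = sets B'"
  shows "retr A' B'"
proof -
  have sp: "space A = space A'" using assms(2) by (rule sets_eq_imp_space_eq)
  show ?thesis using assms(1) unfolding retr_def
    using measurable_cong_sets[OF assms(2) assms(3)] measurable_cong_sets[OF assms(3) assms(2)] sp
    by metis
qed

lemma retr_pair: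
  assumes "retr A A'" "retr B B'"
  shows "retr (A \<Otimes>\<^sub>M B) (A' \<Otimes>\<^sub>M B')"
proof -
  obtain i r where ir: "i \<in> A \<rightarrow>\<^sub>M A'" "r \<in> A' \<rightarrow>\<^sub>M A" "\<And>x. x \<in> space A \<Longrightarrow> r (i x) = x"
    using assms(1) unfolding retr_def by blast
  obtain j s where js: "j \<in> B \<rightarrow>\<^sub>M B'" "s \<in> B' \<rightarrow>\<^sub>M B" "\<And>x. x \<in> space B \<Longrightarrow> s (j x) = x"
    using assms(2) unfolding retr_def by blast
  have "map_prod i j \<in> A \<Otimes>\<^sub>M B \<rightarrow>\<^sub>M A' \<Otimes>\<^sub>M B'" "map_prod r s \<in> A' \<Otimes>\<^sub>M B' \<rightarrow>\<^sub>M A \<Otimes>\<^sub>M B"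
    using ir js by (auto intro!: measurable_pair simp: map_prod_def split_beta')
  moreover have "\<forall>x\<in>space (A \<Otimes>\<^sub>M B). map_prod r s (map_prod i j x) = x"
    using ir js by (auto simp: space_pair_measure)
  ultimately show ?thesis unfolding retr_def by blast
qed

definition bitr :: "real \<Rightarrow> nat \<Rightarrow> real" where
  "bitr y k = of_int (\<lfloor>2^(Suc k) * y\<rfloor> mod 2)"

lemma floor_double: fixes z :: real shows "\<lfloor>2*z\<rfloor> = 2*\<lfloor>z\<rfloor> + \<lfloor>2*z\<rfloor> mod 2"
proof -
  have "2*\<lfloor>z\<rfloor> \<le> \<lfloor>2*z\<rfloor>" by (simp add: le_floor_iff)
  moreover have "\<lfloor>2*z\<rfloor> < 2*\<lfloor>z\<rfloor> + 2"
    unfolding floor_less_iff using real_of_int_floor_add_one_gt[of z] by (simp, linarith)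
  ultimately show ?thesis by presburger
qed

lemma bitr_01: "bitr y k = 0 \<or> bitr y k = 1"
proof -
  have "\<lfloor>2^(Suc k) * y\<rfloor> mod 2 = 0 \<or> \<lfloor>2^(Suc k) * y\<rfloor> mod 2 = 1" by presburger
  then show ?thesis unfolding bitr_def by auto
qed

lemma bin_partial:
  assumes "0 \<le> y" "y < 1"
  shows "(\<Sum>k<n. bitr y k / 2^(Suc k)) = of_int \<lfloor>2^n * y\<rfloor> / 2^n"
proof (induction n)
  case 0
  have "\<lfloor>y\<rfloor> = 0" using assms by (simp add: floor_eq_iff)
  then show ?case by simp
next
  case (Suc n)
  have fd: "\<lfloor>2^(Suc n) * y\<rfloor> = 2*\<lfloor>2^n * y\<rfloor> + \<lfloor>2^(Suc n) * y\<rfloor> mod 2"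
    using floor_double[of "2^n * y"] by (simp add: mult.assoc)
  have "(\<Sum>k<Suc n. bitr y k / 2^(Suc k)) = of_int \<lfloor>2^n * y\<rfloor> / 2^n + bitr y n / 2^(Suc n)"
    using Suc by simp
  also have "\<dots> = (2 * of_int \<lfloor>2^n * y\<rfloor> + bitr y n) / 2^(Suc n)"
    by (simp add: field_simps)
  also have "\<dots> = of_int \<lfloor>2^(Suc n) * y\<rfloor> / 2^(Suc n)"
    unfolding bitr_def using arg_cong[OF fd, of "of_int :: int \<Rightarrow> real"] by simp
  finally show ?case .
qed

lemma bin_sums:
  assumes "0 \<le> y" "y < 1"
  shows "(\<lambda>k. bitr y k / 2^(Suc k)) sums y"
  unfolding sums_def bin_partial[OF assms]
proof (rule tendsto_sandwich[of "\<lambda>n. y - (1/2)^n" _ _ "\<lambda>n. y"])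
  show "\<forall>\<^sub>F n in sequentially. y - (1/2)^n \<le> of_int \<lfloor>2^n * y\<rfloor> / 2^n"
  proof (intro always_eventually allI)
    fix n :: nat
    have "2^n * y - 1 \<le> of_int \<lfloor>2^n * y\<rfloor>" using real_of_int_floor_add_one_gt[of "2^n*y"] by linarith
    then have "(2^n * y - 1) / 2^n \<le> of_int \<lfloor>2^n * y\<rfloor> / 2^n" by (intro divide_right_mono) auto
    then show "y - (1/2)^n \<le> of_int \<lfloor>2^n * y\<rfloor> / 2^n" by (simp add: field_simps power_divide)
  qed
  show "\<forall>\<^sub>F n in sequentially. of_int \<lfloor>2^n * y\<rfloor> / 2^n \<le> y"
  proof (intro always_eventually allI)
    fix n :: nat
    have "of_int \<lfloor>2^n * y\<rfloor> \<le> 2^n * y" by simp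
    then show "of_int \<lfloor>2^n * y\<rfloor> / 2^n \<le> y" by (simp add: field_simps)
  qed
  show "(\<lambda>n. y - (1/2::real)^n) \<longlonglongrightarrow> y"
    using tendsto_diff[OF tendsto_const[of y] LIMSEQ_power_zero[of "1/2::real"]] by simp
  show "(\<lambda>n. y) \<longlonglongrightarrow> y" by simp
qed

subsection \<open>Squashing the real line into the unit interval\<close>

definition sq :: "real \<Rightarrow> real" where "sq t = 1/2 + t / (2*(1+\<bar>t\<bar>))"
definition usq :: "real \<Rightarrow> real" where "usq y = (2*y-1) / (1 - \<bar>2*y-1\<bar>)"

lemma sq_u: "sq t = 1/2 + (t / (1+\<bar>t\<bar>)) / 2"
  unfolding sq_def by simp

lemma sq_range: "0 < sq t \<and> sq t < 1"
proof -
  define u where "u = t / (1+\<bar>t\<bar>)"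
  have p: "0 < 1 + \<bar>t\<bar>" by simp
  have e: "\<bar>u\<bar> = \<bar>t\<bar> / (1+\<bar>t\<bar>)" unfolding u_def by (simp add: abs_divide)
  have "\<bar>t\<bar> / (1+\<bar>t\<bar>) < 1" using p by (simp add: divide_less_eq)
  then have "\<bar>u\<bar> < 1" using e by simp
  moreover have "sq t = 1/2 + u/2" unfolding sq_u u_def ..
  ultimately show ?thesis by linarith
qed

lemma usq_sq: "usq (sq t) = t"
proof -
  define u where "u = t / (1+\<bar>t\<bar>)"
  have pos: "1 + \<bar>t\<bar> > 0" by simp
  have "sq t = 1/2 + u/2" unfolding sq_u u_def ..
  then have a: "2 * sq t - 1 = u" by simp
  have b: "\<bar>u\<bar> = \<bar>t\<bar> / (1+\<bar>t\<bar>)" unfolding u_def by (simp add: abs_divide)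
  have c: "1 - \<bar>t\<bar> / (1+\<bar>t\<bar>) = 1 / (1+\<bar>t\<bar>)" using pos by (simp add: diff_divide_distrib[symmetric] divide_simps)
  have "usq (sq t) = u / (1 / (1+\<bar>t\<bar>))" unfolding usq_def a b c ..
  also have "\<dots> = t" unfolding u_def using pos by simp
  finally show ?thesis .
qed

definition enc4 :: "(nat \<Rightarrow> real) \<Rightarrow> real" where "enc4 b = (\<Sum>m. b m / 4^(Suc m))"
definition dg4 :: "real \<Rightarrow> nat \<Rightarrow> real" where "dg4 t m = of_int (\<lfloor>4^(Suc m) * t\<rfloor> mod 4)"

lemma dg4_enc4:
  assumes b01: "\<And>m. b m = 0 \<or> b m = 1"
  shows "dg4 (enc4 b) m = b m"
proof -
  define c where "c i = (if b i = 1 then 1 else 0 :: int)" for i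
  have bc: "b i = of_int (c i)" for i using b01[of i] by (auto simp: c_def)
  have c01: "0 \<le> c i \<and> c i \<le> 1" for i by (simp add: c_def)
  have bnd: "norm (b m / 4^(Suc m)) \<le> (1/4)^(Suc m)" for m
    using b01[of m] by (auto simp: power_divide)
  have "summable (\<lambda>m. (1/4::real)^m)" by (rule summable_geometric) simp
  then have sg: "summable (\<lambda>m. (1/4::real)^(Suc m))" by (subst summable_Suc_iff)
  then have sb: "summable (\<lambda>m. b m / 4^(Suc m))" by (rule summable_comparison_test'[OF _ bnd])
  define J where "J = rec_nat (c 0) (\<lambda>m j. 4 * j + c (Suc m))"
  have J0: "J 0 = c 0" and JS: "J (Suc m) = 4 * J m + c (Suc m)" for m by (simp_all add: J_def)
  have PJ: "4^(Suc m) * (\<Sum>i<Suc m. b i / 4^(Suc i)) = of_int (J m)" for m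
  proof (induction m)
    case 0 then show ?case by (simp add: J0 bc)
  next
    case (Suc m)
    have "4^(Suc (Suc m)) * (\<Sum>i<Suc (Suc m). b i / 4^(Suc i))
        = 4 * (4^(Suc m) * (\<Sum>i<Suc m. b i / 4^(Suc i))) + b (Suc m)"
      by (simp add: field_simps)
    also have "\<dots> = of_int (J (Suc m))" using Suc by (simp add: JS bc)
    finally show ?case .
  qed
  have Jmod: "J m mod 4 = c m" for m
  proof (cases m)
    case 0 then show ?thesis using c01[of 0] by (simp add: J0)
  next
    case (Suc k) then show ?thesis using c01[of m] by (simp add: JS)
  qed
  define T where "T = 4^(Suc m) * (\<Sum>i. b (i + Suc m) / 4^(Suc (i + Suc m)))"
  have split: "enc4 b = (\<Sum>i. b (i + Suc m) / 4^(Suc (i + Suc m))) + (\<Sum>i<Suc m. b i / 4^(Suc i))"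
    unfolding enc4_def by (rule suminf_split_initial_segment[OF sb])
  have T_eq: "T = (\<Sum>i. b (i + Suc m) / 4^(Suc i))"
  proof -
    have st: "summable (\<lambda>i. b (i + Suc m) / 4^(Suc (i + Suc m)))" using sb by (rule summable_ignore_initial_segment)
    have "T = (\<Sum>i. 4^(Suc m) * (b (i + Suc m) / 4^(Suc (i + Suc m))))"
      unfolding T_def by (rule suminf_mult[OF st, symmetric])
    also have "\<dots> = (\<Sum>i. b (i + Suc m) / 4^(Suc i))"
      by (intro suminf_cong) (simp add: power_add field_simps)
    finally show ?thesis .
  qed
  have bnd2: "0 \<le> b (i + Suc m) / 4^(Suc i) \<and> b (i + Suc m) / 4^(Suc i) \<le> (1/4)^(Suc i)" for i
    using b01[of "i + Suc m"] by (auto simp: power_divide)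
  have bnd3: "norm (b (i + Suc m) / 4^(Suc i)) \<le> (1/4)^(Suc i)" for i
    using b01[of "i + Suc m"] by (auto simp: power_divide)
  have sT: "summable (\<lambda>i. b (i + Suc m) / 4^(Suc i))"
    by (rule summable_comparison_test'[OF sg bnd3])
  have T0: "0 \<le> T" unfolding T_eq using bnd2 by (intro suminf_nonneg sT) auto
  have g3: "(\<Sum>i. (1/4::real)^(Suc i)) = 1/3"
  proof -
    have "(\<Sum>i. (1/4::real)^(Suc i)) = (\<Sum>i. (1/4) * (1/4::real)^i)" by simp
    also have "\<dots> = (1/4) * (\<Sum>i. (1/4::real)^i)" by (intro suminf_mult summable_geometric) simp
    also have "\<dots> = 1/3" by (subst suminf_geometric) simp_all
    finally show ?thesis .
  qed
  have T1: "T \<le> 1/3" unfolding T_eq g3[symmetric] using bnd2 by (intro suminf_le sT sg) auto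
  have "4^(Suc m) * enc4 b = of_int (J m) + T"
    unfolding split T_def PJ[symmetric] by (simp add: field_simps)
  then have "\<lfloor>4^(Suc m) * enc4 b\<rfloor> = J m" using T0 T1 by (simp add: floor_eq_iff)
  then show ?thesis unfolding dg4_def using Jmod[of m] bc[of m] by simp
qed

subsection \<open>Sequences of reals coded by a real\<close>

definition cbit :: "(nat \<Rightarrow> real) \<Rightarrow> nat \<Rightarrow> real" where
  "cbit y m = bitr (sq (y (fst (prod_decode m)))) (snd (prod_decode m))"
definition Eseq :: "(nat \<Rightarrow> real) \<Rightarrow> real" where "Eseq y = enc4 (cbit y)"
definition Dseq :: "real \<Rightarrow> nat \<Rightarrow> real" where
  "Dseq t = (\<lambda>n. usq (\<Sum>k. dg4 t (prod_encode (n, k)) / 2^(Suc k)))"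

lemma Dseq_Eseq: "Dseq (Eseq y) = y"
proof
  fix n
  have "dg4 (Eseq y) m = cbit y m" for m unfolding Eseq_def by (rule dg4_enc4) (simp add: cbit_def bitr_01)
  then have "(\<Sum>k. dg4 (Eseq y) (prod_encode (n, k)) / 2^(Suc k)) = (\<Sum>k. bitr (sq (y n)) k / 2^(Suc k))"
    by (simp add: cbit_def)
  also have "\<dots> = sq (y n)" using bin_sums[of "sq (y n)"] sq_range[of "y n"] by (simp add: sums_iff)
  finally show "Dseq (Eseq y) n = y n" unfolding Dseq_def by (simp add: usq_sq)
qed

lemma retr_seq_real: "retr (Pi\<^sub>M UNIV (\<lambda>_::nat. borel :: real measure)) (borel :: real measure)"
  unfolding retr_def
proof (intro exI conjI)
  show "Eseq \<in> borel_measurable (Pi\<^sub>M UNIV (\<lambda>_::nat. borel :: real measure))"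
    unfolding Eseq_def enc4_def cbit_def bitr_def sq_def by measurable
  show "Dseq \<in> borel \<rightarrow>\<^sub>M Pi\<^sub>M UNIV (\<lambda>_::nat. borel :: real measure)"
  proof -
    have um: "usq \<in> borel_measurable borel" unfolding usq_def by measurable
    have "(\<lambda>t. \<Sum>k. dg4 t (prod_encode (n, k)) / 2^(Suc k)) \<in> borel_measurable borel" for n
      by (intro borel_measurable_suminf) (unfold dg4_def, measurable)
    from measurable_compose[OF this um]
    show ?thesis unfolding Dseq_def by (intro measurable_PiM_single') (auto simp: o_def)
  qed
  show "\<forall>x\<in>space (Pi\<^sub>M UNIV (\<lambda>_. borel)). Dseq (Eseq x) = x" by (simp add: Dseq_Eseq)
qed

lemma retr_pair_real: "retr (borel \<Otimes>\<^sub>M borel :: (real \<times> real) measure) (borel :: real measure)"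
proof -
  have "retr (borel \<Otimes>\<^sub>M borel :: (real \<times> real) measure) (Pi\<^sub>M UNIV (\<lambda>_::nat. borel :: real measure))"
    unfolding retr_def
  proof (intro exI conjI)
    show "(\<lambda>p::real\<times>real. \<lambda>n::nat. if n = 0 then fst p else snd p) \<in> borel \<Otimes>\<^sub>M borel \<rightarrow>\<^sub>M Pi\<^sub>M UNIV (\<lambda>_. borel)"
      by (rule measurable_PiM_single') (measurable, auto)
    show "(\<lambda>y::nat\<Rightarrow>real. (y 0, y 1)) \<in> Pi\<^sub>M UNIV (\<lambda>_. borel) \<rightarrow>\<^sub>M borel \<Otimes>\<^sub>M borel"
      by measurable
    show "\<forall>x\<in>space (borel \<Otimes>\<^sub>M borel :: (real \<times> real) measure). (\<lambda>y::nat\<Rightarrow>real. (y 0, y 1)) ((\<lambda>p::real\<times>real. \<lambda>n::nat. if n = 0 then fst p else snd p) x) = x"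
      by simp
  qed
  then show ?thesis using retr_seq_real by (rule retr_trans)
qed

lemma borel_of_eq: "borel_of T = measure_of (topspace T) {U. openin T U} (\<lambda>_. 0)"
  unfolding borel_of_def ..

lemma space_borel_of: "space (borel_of T) = topspace T"
  unfolding borel_of_eq by (rule space_measure_of) (auto dest: openin_subset)

lemma sets_borel_of: "sets (borel_of T) = sigma_sets (topspace T) {U. openin T U}"
  unfolding borel_of_eq by (rule sets_measure_of) (auto dest: openin_subset)

lemma openin_in_borel_of: "openin T U \<Longrightarrow> U \<in> sets (borel_of T)"
  unfolding sets_borel_of by auto

lemma gdelta_in_borel:
  fixes S :: "'a::topological_space set"
  assumes "gdelta_in euclidean S"
  shows "S \<in> sets borel"
proof -
  obtain \<U> where U: "countable \<U>" "\<U> \<subseteq> Collect (openin euclidean)" "\<Inter>\<U> = S"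
    using assms unfolding gdelta_in_def intersection_of_def relative_to_def by auto
  have "\<Inter>(id ` \<U>) \<in> sets borel"
    using U(1,2) by (intro sets.countable_INT'') auto
  then show ?thesis using U(3) by simp
qed

theorem standard_borel_retr:
  fixes X :: "'x measure"
  assumes sb: "standard_borel X" and ne: "space X \<noteq> {}"
  shows "retr X (Pi\<^sub>M UNIV (\<lambda>_::nat. borel :: real measure))"
proof -
  obtain T where T: "Polish_space T" "topspace T = space X" "sets X = sets (borel_of T)"
    using sb unfolding standard_borel_def by blast
  obtain Mm d where Md: "Metric_space Mm d" "Metric_space.mcomplete Mm d" "T = Metric_space.mtopology Mm d"
    using T(1) unfolding Polish_space_def completely_metrizable_space_def by blast
  interpret Metric_space Mm d by (rule Md(1))
  have Mm: "Mm = space X" using T(2) Md(3) by simp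
  obtain C where C: "countable C" "C \<subseteq> topspace T" "T closure_of C = topspace T"
    using T(1) unfolding Polish_space_def separable_space_def by blast
  have CM: "C \<subseteq> Mm" using C(2) Md(3) by simp
  have clo: "mtopology closure_of C = Mm" using C(3) Md(3) by simp
  have "C \<noteq> {}" using clo ne Mm by auto
  define a where "a = from_nat_into C"
  have ra: "range a = C" using C(1) \<open>C \<noteq> {}\<close> by (simp add: a_def range_from_nat_into)
  have aM: "a j \<in> Mm" for j using ra CM by auto
  have dense: "\<exists>j. d x (a j) < r" if xr: "x \<in> Mm" "r > 0" for x r
  proof -
    have "x \<in> mtopology closure_of C" using clo xr by simp
    then have "\<exists>y\<in>C. y \<in> mball x r" using xr(2) unfolding metric_closure_of by blast
    then obtain y where "y \<in> C" "y \<in> mball x r" by blast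
    then show ?thesis using ra by auto
  qed
  define e where "e x = (\<lambda>j. d x (a j))" for x
  have openimg: "\<exists>Ov. open Ov \<and> e ` U = e ` Mm \<inter> Ov" if U: "openin mtopology U" for U
  proof -
    have UM: "U \<subseteq> Mm" using U openin_mtopology by blast
    have "\<exists>j r. r > 0 \<and> mball x (3*r) \<subseteq> U \<and> d x (a j) < r" if x: "x \<in> U" for x
    proof -
      obtain r where r: "r > 0" "mball x r \<subseteq> U" using U x unfolding openin_mtopology by blast
      obtain j where "d x (a j) < r/3" using dense[of x "r/3"] x UM r by auto
      then show ?thesis using r by (intro exI[of _ j] exI[of _ "r/3"]) auto
    qed
    then obtain J R where JR: "\<And>x. x \<in> U \<Longrightarrow> R x > 0 \<and> mball x (3 * R x) \<subseteq> U \<and> d x (a (J x)) < R x"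
      by metis
    define Ov where "Ov = (\<Union>x\<in>U. {y::nat\<Rightarrow>real. \<bar>y (J x) - d x (a (J x))\<bar> < R x})"
    have "open Ov" unfolding Ov_def
      by (intro open_UN ballI open_Collect_less continuous_intros continuous_on_product_coordinates)
    moreover have "e ` U = e ` Mm \<inter> Ov"
    proof
      show "e ` U \<subseteq> e ` Mm \<inter> Ov"
      proof
        fix y assume "y \<in> e ` U"
        then obtain x where x: "x \<in> U" "y = e x" by auto
        then have "y \<in> {y::nat\<Rightarrow>real. \<bar>y (J x) - d x (a (J x))\<bar> < R x}" using JR[of x] by (simp add: e_def)
        then show "y \<in> e ` Mm \<inter> Ov" using x UM unfolding Ov_def by blast
      qed
      show "e ` Mm \<inter> Ov \<subseteq> e ` U"
      proof
        fix y assume "y \<in> e ` Mm \<inter> Ov"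
        then obtain x' x where x': "x' \<in> Mm" "y = e x'" and x: "x \<in> U" and
          lt: "\<bar>d x' (a (J x)) - d x (a (J x))\<bar> < R x"
          unfolding Ov_def e_def by auto
        have xM: "x \<in> Mm" using x UM by auto
        have "d x x' \<le> d x (a (J x)) + d (a (J x)) x'" using triangle xM x'(1) aM by blast
        also have "\<dots> < 3 * R x" using lt JR[OF x] commute[of x' "a (J x)"] by linarith
        finally have "x' \<in> mball x (3 * R x)" using xM x'(1) by simp
        then have "x' \<in> U" using JR[OF x] by blast
        then show "y \<in> e ` U" using x' by blast
      qed
    qed
    ultimately show ?thesis by blast
  qed
  have inj: "inj_on e Mm"
  proof
    fix x y assume xy: "x \<in> Mm" "y \<in> Mm" "e x = e y"
    show "x = y"
    proof (rule ccontr)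
      assume "x \<noteq> y"
      then have pos: "d x y > 0" using xy by simp
      have "d x y / 2 > 0" using pos by simp
      from dense[OF xy(1) this] obtain j where j: "d x (a j) < d x y / 2" by blast
      have "d y (a j) = d x (a j)" using xy(3) unfolding e_def by metis
      moreover have "d x y \<le> d x (a j) + d (a j) y" using triangle xy aM by blast
      ultimately show False using j commute[of y "a j"] by linarith
    qed
  qed
  have dmeas: "(\<lambda>x. d x c) \<in> borel_measurable X" if c: "c \<in> Mm" for c
  proof (rule borel_measurableI_less)
    fix y :: real
    have "{x \<in> space X. d x c < y} = mball c y" unfolding Mm[symmetric] mball_def using c commute by auto
    moreover have "mball c y \<in> sets X" unfolding T(3) using Md(3) by (intro openin_in_borel_of) simp
    ultimately show "{x \<in> space X. d x c < y} \<in> sets X" by simp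
  qed
  have emeas: "e \<in> X \<rightarrow>\<^sub>M Pi\<^sub>M UNIV (\<lambda>_. borel)"
    unfolding e_def using dmeas aM by (intro measurable_PiM_single') auto
  have cont: "continuous_map mtopology euclidean e"
  proof -
    have "continuous_map mtopology euclideanreal (\<lambda>x. d x (a j))" for j
    proof -
      have "continuous_map mtopology euclideanreal (\<lambda>x. mdist (metric (Mm, d)) (id x) ((\<lambda>_. a j) x))"
        using aM by (intro continuous_map_mdist) (auto simp: mtopology_of Metric_space_axioms)
      then show ?thesis by (simp add: mdist_metric Metric_space_axioms)
    qed
    then show ?thesis unfolding e_def euclidean_product_topology[symmetric] continuous_map_componentwise_UNIV
      by simp
  qed
  have "homeomorphic_map mtopology (subtopology euclidean (e ` Mm)) e"
  proof (rule bijective_open_imp_homeomorphic_map)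
    show "continuous_map mtopology (subtopology euclidean (e ` Mm)) e"
      using cont by (simp add: continuous_map_into_subtopology)
    show "open_map mtopology (subtopology euclidean (e ` Mm)) e"
      unfolding open_map_def
    proof (intro allI impI)
      fix U assume "openin mtopology U"
      then obtain Ov where "open Ov" "e ` U = e ` Mm \<inter> Ov" using openimg by blast
      then show "openin (subtopology euclidean (e ` Mm)) (e ` U)"
        unfolding openin_subtopology by auto
    qed
    show "e ` topspace mtopology = topspace (subtopology euclidean (e ` Mm))" by simp
    show "inj_on e (topspace mtopology)" using inj by simp
  qed
  then have "mtopology homeomorphic_space (subtopology euclidean (e ` Mm))"
    unfolding homeomorphic_space_def homeomorphic_map_maps by blast
  then have "completely_metrizable_space (subtopology euclidean (e ` Mm))"
    using homeomorphic_completely_metrizable_space completely_metrizable_space_mtopology[OF Md(2)] by blast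
  then have "gdelta_in euclidean (e ` Mm)"
    by (intro completely_metrizable_space_imp_gdelta_in metrizable_space_euclidean) auto
  then have eMb: "e ` Mm \<in> sets (Pi\<^sub>M UNIV (\<lambda>_::nat. borel :: real measure))"
    unfolding sets_PiM_equal_borel by (rule gdelta_in_borel)
  obtain x0 where x0: "x0 \<in> Mm" using ne Mm by auto
  define r where "r y = (if y \<in> e ` Mm then inv_into Mm e y else x0)" for y
  have rei: "r (e x) = x" if "x \<in> Mm" for x unfolding r_def using inj that by simp
  have rM: "r y \<in> Mm" for y unfolding r_def using x0 by (auto intro: inv_into_into)
  have "r \<in> Pi\<^sub>M UNIV (\<lambda>_::nat. borel :: real measure) \<rightarrow>\<^sub>M borel_of T"
    unfolding borel_of_eq
  proof (rule measurable_measure_of)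
    show "{U. openin T U} \<subseteq> Pow (topspace T)" by (auto dest: openin_subset)
    show "r \<in> space (Pi\<^sub>M UNIV (\<lambda>_. borel)) \<rightarrow> topspace T" using rM Md(3) by auto
    fix U assume "U \<in> {U. openin T U}"
    then have U: "openin mtopology U" using Md(3) by simp
    then have UM: "U \<subseteq> Mm" using openin_mtopology by blast
    obtain Ov where Ov: "open Ov" "e ` U = e ` Mm \<inter> Ov" using openimg[OF U] by blast
    have "r -` U \<inter> space (Pi\<^sub>M UNIV (\<lambda>_. borel)) = (e ` Mm \<inter> Ov) \<union> (if x0 \<in> U then - e ` Mm else {})"
    proof -
      have "y \<in> e ` Mm \<Longrightarrow> r y \<in> U \<longleftrightarrow> y \<in> Ov" for y
      proof -
        assume "y \<in> e ` Mm"
        then obtain x where x: "x \<in> Mm" "y = e x" by auto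
        have "r y \<in> U \<longleftrightarrow> x \<in> U" using rei x by simp
        also have "\<dots> \<longleftrightarrow> e x \<in> e ` U" using inj x UM by (auto simp: inj_on_image_mem_iff)
        also have "\<dots> \<longleftrightarrow> y \<in> Ov" using Ov(2) x by auto
        finally show ?thesis .
      qed
      moreover have "y \<notin> e ` Mm \<Longrightarrow> r y = x0" for y unfolding r_def by simp
      ultimately show ?thesis by (auto simp: space_PiM; metis)
    qed
    moreover have "Ov \<in> sets (Pi\<^sub>M UNIV (\<lambda>_::nat. borel :: real measure))"
      unfolding sets_PiM_equal_borel using Ov(1) by simp
    show "r -` U \<inter> space (Pi\<^sub>M UNIV (\<lambda>_. borel)) \<in> sets (Pi\<^sub>M UNIV (\<lambda>_::nat. borel :: real measure))"
    proof -
      have cm: "- e ` Mm \<in> sets (Pi\<^sub>M UNIV (\<lambda>_::nat. borel :: real measure))"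
        using sets.compl_sets[OF eMb] by (simp add: space_PiM Compl_eq_Diff_UNIV)
      show ?thesis using eMb cm \<open>Ov \<in> sets _\<close> \<open>r -` U \<inter> _ = _\<close> by auto
    qed
  qed
  then have rmeas: "r \<in> Pi\<^sub>M UNIV (\<lambda>_::nat. borel :: real measure) \<rightarrow>\<^sub>M X"
    using measurable_cong_sets[OF refl T(3)[symmetric]] by blast
  show ?thesis unfolding retr_def using emeas rmeas rei Mm by blast
qed

subsection \<open>A decreasing rational sequence converging to a real from above\<close>

definition rnext :: "real \<Rightarrow> nat \<Rightarrow> rat \<Rightarrow> rat" where
  "rnext t n q = (SOME q'. t < of_rat q' \<and> of_rat q' < min (of_rat q) (t + 1 / real (Suc (Suc n))))"

definition rseq :: "real \<Rightarrow> nat \<Rightarrow> rat" where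
  "rseq t = rec_nat (SOME q. t < of_rat q \<and> of_rat q < t + 1) (rnext t)"

lemma rseq_props: "t < of_rat (rseq t n) \<and> of_rat (rseq t n) < t + 1 / real (Suc n)"
proof (induction n)
  case 0
  have "\<exists>q. t < of_rat q \<and> of_rat q < t + 1" using of_rat_dense[of t "t+1"] by auto
  from someI_ex[OF this] show ?case by (simp add: rseq_def)
next
  case (Suc n)
  have "t < min (of_rat (rseq t n)) (t + 1 / real (Suc (Suc n)))" using Suc by simp
  then have "\<exists>q'. t < of_rat q' \<and> of_rat q' < min (of_rat (rseq t n)) (t + 1 / real (Suc (Suc n)))"
    using of_rat_dense by blast
  from someI_ex[OF this] have "t < of_rat (rnext t n (rseq t n)) \<and> of_rat (rnext t n (rseq t n)) < min (of_rat (rseq t n)) (t + 1 / real (Suc (Suc n)))"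
    unfolding rnext_def .
  then show ?case by (simp add: rseq_def)
qed

lemma rseq_dec: "rseq t (Suc n) \<le> rseq t n"
proof -
  have "t < min (of_rat (rseq t n)) (t + 1 / real (Suc (Suc n)))" using rseq_props[of t n] by simp
  then have "\<exists>q'. t < of_rat q' \<and> of_rat q' < min (of_rat (rseq t n)) (t + 1 / real (Suc (Suc n)))"
    using of_rat_dense by blast
  from someI_ex[OF this] have "of_rat (rnext t n (rseq t n)) < (of_rat (rseq t n) :: real)"
    unfolding rnext_def by simp
  then show ?thesis by (simp add: rseq_def of_rat_less_eq less_imp_le of_rat_less)
qed

lemma rseq_eventually_below: "t < of_rat c \<Longrightarrow> \<exists>N. \<forall>n\<ge>N. rseq t n < c"
proof -
  assume tc: "t < of_rat c"
  obtain N where N: "1 / real (Suc N) < of_rat c - t" using reals_Archimedean[of "of_rat c - t"] tc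
    by (auto simp: inverse_eq_divide)
  have "rseq t n < c" if "N \<le> n" for n
  proof -
    have "1 / real (Suc n) \<le> 1 / real (Suc N)" using that by (intro divide_left_mono) auto
    then have "(of_rat (rseq t n) :: real) < of_rat c" using rseq_props[of t n] N by linarith
    then show ?thesis by (simp add: of_rat_less)
  qed
  then show ?thesis by blast
qed

subsection \<open>Good families and their distribution functions\<close>

definition goodh :: "(rat \<Rightarrow> 'm \<Rightarrow> real) \<Rightarrow> 'm \<Rightarrow> bool" where
  "goodh h m \<longleftrightarrow> (\<forall>c c'. c \<le> c' \<longrightarrow> h c m \<le> h c' m) \<and> (\<forall>c. 0 \<le> h c m \<and> h c m \<le> 1) \<and>
     (\<forall>k::nat. \<exists>n::nat. 1 - 1 / real (Suc k) < h (of_nat n) m) \<and>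
     (\<forall>k::nat. \<exists>n::nat. h (- of_nat n) m < 1 / real (Suc k))"

definition Fh :: "(rat \<Rightarrow> 'm \<Rightarrow> real) \<Rightarrow> 'm \<Rightarrow> real \<Rightarrow> real" where
  "Fh h m t = (INF c\<in>{c. t < of_rat c}. h c m)"

lemma ne_above: "{c::rat. (t::real) < of_rat c} \<noteq> {}"
  using of_rat_dense[of t "t+1"] by auto

context
  fixes h :: "rat \<Rightarrow> 'm \<Rightarrow> real" and m :: 'm
  assumes g: "goodh h m"
begin

lemma bdd: "bdd_below ((\<lambda>c. h c m) ` {c. (t::real) < of_rat c})"
  using g unfolding goodh_def by (intro bdd_belowI[of _ 0]) auto

lemma Fh_le: "t < of_rat c \<Longrightarrow> Fh h m t \<le> h c m"
  unfolding Fh_def by (rule cINF_lower[OF bdd]) auto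

lemma Fh_ge: "of_rat c \<le> t \<Longrightarrow> h c m \<le> Fh h m t"
  unfolding Fh_def
proof (rule cINF_greatest[OF ne_above])
  fix c' assume "c' \<in> {c. t < of_rat c}" "of_rat c \<le> t"
  then have "c \<le> c'" by (metis less_le_not_le mem_Collect_eq nle_le of_rat_less_eq order_trans)
  then show "h c m \<le> h c' m" using g unfolding goodh_def by blast
qed

lemma Fh_nonneg: "0 \<le> Fh h m t"
  unfolding Fh_def using g unfolding goodh_def by (intro cINF_greatest[OF ne_above]) auto

lemma Fh_le1: "Fh h m t \<le> 1"
proof -
  obtain c where "t < of_rat c" using ne_above by auto
  then show ?thesis using Fh_le g unfolding goodh_def by (meson order_trans)
qed

lemma Fh_mono: "t \<le> s \<Longrightarrow> Fh h m t \<le> Fh h m s"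
  unfolding Fh_def
proof (rule cINF_greatest[OF ne_above])
  fix c assume "c \<in> {c. s < of_rat c}" "t \<le> s"
  then have "t < of_rat c" by auto
  then show "(INF c\<in>{c. t < of_rat c}. h c m) \<le> h c m" by (rule Fh_le[unfolded Fh_def])
qed

lemma Fh_less: "Fh h m t < a \<Longrightarrow> \<exists>c. t < of_rat c \<and> h c m < a"
  unfolding Fh_def using cInf_less_iff[of "(\<lambda>c. h c m) ` {c. t < of_rat c}" a] ne_above[of t] bdd[of t] by auto

lemma Fh_lim: "(\<lambda>n. h (rseq t n) m) \<longlonglongrightarrow> Fh h m t"
proof (rule order_tendstoI)
  fix a assume "a < Fh h m t"
  then show "\<forall>\<^sub>F n in sequentially. a < h (rseq t n) m"
    using Fh_le rseq_props by (intro always_eventually allI) (meson less_le_trans)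
next
  fix a assume "Fh h m t < a"
  then obtain c where c: "t < of_rat c" "h c m < a" using Fh_less by blast
  then obtain N where "\<forall>n\<ge>N. rseq t n < c" using rseq_eventually_below by blast
  then show "\<forall>\<^sub>F n in sequentially. h (rseq t n) m < a"
    unfolding eventually_sequentially using g c unfolding goodh_def
    by (meson less_imp_le le_less_trans)
qed

lemma Fh_right_cont: "continuous (at_right t) (Fh h m)"
  unfolding continuous_within
proof (rule order_tendstoI)
  fix a assume "a < Fh h m t"
  then show "\<forall>\<^sub>F s in at_right t. a < Fh h m s"
    using Fh_mono eventually_at_right_less[of t] by (auto elim!: eventually_mono intro: less_le_trans)
next
  fix a assume "Fh h m t < a"
  then obtain c where c: "t < of_rat c" "h c m < a" using Fh_less by blast
  show "\<forall>\<^sub>F s in at_right t. Fh h m s < a"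
    using eventually_at_right_real[OF c(1)]
  proof (rule eventually_mono)
    fix s assume "s \<in> {t<..<of_rat c}"
    then have "Fh h m s \<le> h c m" by (intro Fh_le) auto
    then show "Fh h m s < a" using c by simp
  qed
qed

lemma Fh_at_top: "(Fh h m \<longlongrightarrow> 1) at_top"
proof (rule order_tendstoI)
  fix a :: real assume "a < 1"
  then obtain k where k: "1 / real (Suc k) < 1 - a" using reals_Archimedean[of "1 - a"] by (auto simp: inverse_eq_divide)
  obtain n :: nat where n: "1 - 1 / real (Suc k) < h (of_nat n) m" using g unfolding goodh_def by blast
  show "\<forall>\<^sub>F s in at_top. a < Fh h m s"
    unfolding eventually_at_top_linorder
  proof (intro exI[of _ "real n"] allI impI)
    fix s assume "real n \<le> s"
    then have "h (of_nat n) m \<le> Fh h m s" by (intro Fh_ge) simp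
    then show "a < Fh h m s" using k n by linarith
  qed
next
  fix a :: real assume "1 < a"
  then show "\<forall>\<^sub>F s in at_top. Fh h m s < a" using Fh_le1 by (intro always_eventually allI) (meson le_less_trans)
qed

lemma Fh_at_bot: "(Fh h m \<longlongrightarrow> 0) at_bot"
proof (rule order_tendstoI)
  fix a :: real assume "a < 0"
  then show "\<forall>\<^sub>F s in at_bot. a < Fh h m s" using Fh_nonneg by (intro always_eventually allI) (meson less_le_trans)
next
  fix a :: real assume "0 < a"
  then obtain k where k: "1 / real (Suc k) < a" using reals_Archimedean[of a] by (auto simp: inverse_eq_divide)
  obtain n :: nat where n: "h (- of_nat n) m < 1 / real (Suc k)" using g unfolding goodh_def by blast
  show "\<forall>\<^sub>F s in at_bot. Fh h m s < a"
    unfolding eventually_at_bot_linorder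
  proof (intro exI[of _ "- real n - 1"] allI impI)
    fix s assume "s \<le> - real n - 1"
    then have "s < of_rat (- of_nat n)" by (simp add: of_rat_minus)
    then have "Fh h m s \<le> h (- of_nat n) m" by (rule Fh_le)
    then show "Fh h m s < a" using k n by linarith
  qed
qed

lemma Fh_real_distribution: "real_distribution (interval_measure (Fh h m))"
  using Fh_mono Fh_right_cont Fh_at_bot Fh_at_top by (intro real_distribution_interval_measure) auto

lemma Fh_cdf: "cdf (interval_measure (Fh h m)) = Fh h m"
  using Fh_mono Fh_right_cont Fh_at_bot by (intro cdf_interval_measure) auto

end

definition kern :: "(rat \<Rightarrow> 'm \<Rightarrow> real) \<Rightarrow> 'm \<Rightarrow> real measure" where
  "kern h m = (if goodh h m then interval_measure (Fh h m) else return borel 0)"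

lemma kern_good: "goodh h m \<Longrightarrow> emeasure (kern h m) {..t} = ennreal (Fh h m t)"
proof -
  assume g: "goodh h m"
  interpret real_distribution "interval_measure (Fh h m)" using Fh_real_distribution[OF g] .
  have "prob {..t} = Fh h m t" using fun_cong[OF Fh_cdf[OF g, unfolded cdf_def], of t] by simp
  then show ?thesis using g by (simp add: kern_def emeasure_eq_measure)
qed

lemma goodh_measurable:
  assumes "\<And>c. h c \<in> borel_measurable MM"
  shows "{m \<in> space MM. goodh h m} \<in> sets MM"
  unfolding goodh_def using assms by measurable

lemma kern_measurable:
  assumes hm: "\<And>c. h c \<in> borel_measurable MM"
  shows "kern h \<in> MM \<rightarrow>\<^sub>M prob_algebra borel"
proof (rule measurable_prob_algebra_generated[where \<Omega>=UNIV and G="range atMost"])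
  have "sets (sigma (UNIV::real set) (range atMost)) = sigma_sets UNIV (range atMost)"
    by (rule sets_measure_of) auto
  then show "sets borel = sigma_sets UNIV (range (atMost :: real \<Rightarrow> real set))"
    by (metis borel_eq_atMost)
  show "Int_stable (range atMost :: real set set)"
    by (auto simp: Int_stable_def)
  show "range atMost \<subseteq> Pow (UNIV :: real set)" by auto
  fix m assume "m \<in> space MM"
  show "prob_space (kern h m)"
    unfolding kern_def using Fh_real_distribution[of h m]
    by (auto simp: real_distribution_def prob_space_return)
  show "sets (kern h m) = sets borel" unfolding kern_def by simp
next
  fix A :: "real set" assume "A \<in> range atMost"
  then obtain t where A: "A = {..t}" by auto
  define G where "G = {m \<in> space MM. goodh h m}"
  have G: "G \<in> sets MM" unfolding G_def using goodh_measurable[OF hm] .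
  have lim: "(\<lambda>n. if m \<in> G then h (rseq t n) m else 0) \<longlonglongrightarrow> (if m \<in> G then Fh h m t else 0)" if "m \<in> space MM" for m
    using Fh_lim[of h m t] unfolding G_def by auto
  have FG: "(\<lambda>m. if m \<in> G then Fh h m t else 0) \<in> borel_measurable MM"
    by (rule borel_measurable_LIMSEQ_real[OF lim]) (use hm G in measurable)
  have e1: "(\<lambda>m. ennreal (if m \<in> G then Fh h m t else 0)) \<in> borel_measurable MM" using FG by measurable
  have GG: "G \<inter> space MM \<in> sets MM" using G by (simp add: G_def Int_absorb2)
  have "(\<lambda>m. if m \<in> G then ennreal (if m \<in> G then Fh h m t else 0) else emeasure (return borel (0::real)) {..t}) \<in> borel_measurable MM"
    by (rule measurable_If_set[OF e1 _ GG]) simp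
  then have "(\<lambda>m. if m \<in> G then ennreal (Fh h m t) else emeasure (return borel (0::real)) {..t}) \<in> borel_measurable MM"
    by (rule measurable_cong[THEN iffD1, rotated]) simp
  moreover have "emeasure (kern h m) A = (if m \<in> G then ennreal (Fh h m t) else emeasure (return borel (0::real)) {..t})"
    if "m \<in> space MM" for m
    using that kern_good[of h m t] unfolding A G_def by (auto simp: kern_def)
  ultimately show "(\<lambda>m. emeasure (kern h m) A) \<in> borel_measurable MM"
    by (subst measurable_cong[where g="\<lambda>m. if m \<in> G then ennreal (Fh h m t) else emeasure (return borel (0::real)) {..t}"]) auto
qed

lemma kern_cdf:
  assumes rd: "real_distribution N" and h: "\<And>c. h c m = cdf N (of_rat c)"
  shows "goodh h m" "kern h m = N"
proof -
  interpret real_distribution N by (rule rd)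
  show g: "goodh h m"
    unfolding goodh_def
  proof (intro conjI allI impI)
    fix c c' :: rat assume "c \<le> c'"
    then show "h c m \<le> h c' m" unfolding h by (intro cdf_nondecreasing) (simp add: of_rat_less_eq)
  next
    fix c show "0 \<le> h c m" unfolding h by (rule cdf_nonneg)
    show "h c m \<le> 1" unfolding h by (rule cdf_bounded_prob)
  next
    fix k :: nat
    have "1 - 1 / real (Suc k) < 1" by simp
    from order_tendstoD(1)[OF cdf_lim_infty_prob this]
    obtain n where "1 - 1 / real (Suc k) < cdf N (real n)" by (auto simp: eventually_sequentially)
    then show "\<exists>n::nat. 1 - 1 / real (Suc k) < h (of_nat n) m" unfolding h by (intro exI[of _ n]) simp
  next
    fix k :: nat
    have "0 < 1 / real (Suc k)" by simp
    from order_tendstoD(2)[OF cdf_lim_neg_infty this]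
    obtain n where "cdf N (- real n) < 1 / real (Suc k)" by (auto simp: eventually_sequentially)
    then show "\<exists>n::nat. h (- of_nat n) m < 1 / real (Suc k)" unfolding h by (intro exI[of _ n]) (simp add: of_rat_minus)
  qed
  have "Fh h m t = cdf N t" for t
  proof -
    have "(\<lambda>n. h (rseq t n) m) \<longlonglongrightarrow> cdf N t"
    proof -
      have "(\<lambda>n. of_rat (rseq t n)) \<longlonglongrightarrow> t"
      proof (rule tendsto_sandwich[of "\<lambda>n. t" _ _ "\<lambda>n. t + 1 / real (Suc n)"])
        show "\<forall>\<^sub>F n in sequentially. t \<le> of_rat (rseq t n)"
          by (intro always_eventually allI) (use rseq_props[of t] in \<open>simp add: less_imp_le\<close>)
        show "\<forall>\<^sub>F n in sequentially. of_rat (rseq t n) \<le> t + 1 / real (Suc n)"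
          by (intro always_eventually allI) (use rseq_props[of t] in \<open>simp add: less_imp_le\<close>)
        show "(\<lambda>n. t) \<longlonglongrightarrow> t" by simp
        show "(\<lambda>n. t + 1 / real (Suc n)) \<longlonglongrightarrow> t"
          using tendsto_add[OF tendsto_const[of t] LIMSEQ_Suc[OF lim_const_over_n[of 1]]] by simp
      qed
      moreover have "\<forall>\<^sub>F n in sequentially. of_rat (rseq t n) \<in> {t<..}"
        by (intro always_eventually allI) (use rseq_props[of t] in simp)
      ultimately have "filterlim (\<lambda>n. of_rat (rseq t n)) (at_right t) sequentially"
        by (intro tendsto_imp_filterlim_at_right) auto
      moreover have "(cdf N \<longlongrightarrow> cdf N t) (at_right t)" using cdf_is_right_cont[of t] by (simp add: continuous_within)
      ultimately have "((\<lambda>n. cdf N (of_rat (rseq t n))) \<longlongrightarrow> cdf N t) sequentially" by (rule filterlim_compose[rotated])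
      then show ?thesis unfolding h .
    qed
    then show ?thesis using Fh_lim[OF g, of t] LIMSEQ_unique by blast
  qed
  then have "Fh h m = cdf N" by auto
  then have "cdf (kern h m) = cdf N" using Fh_cdf[OF g] g by (simp add: kern_def)
  moreover have "real_distribution (kern h m)" using Fh_real_distribution[OF g] g by (simp add: kern_def)
  ultimately show "kern h m = N" using cdf_unique rd by blast
qed

lemma AE_le_of_set_nn_integral_le:
  fixes f g :: "'a \<Rightarrow> ennreal"
  assumes borel: "f \<in> borel_measurable M" "g \<in> borel_measurable M"
    and g_fin: "integral\<^sup>N M g \<noteq> \<infinity>"
    and le: "\<And>A. A \<in> sets M \<Longrightarrow> (\<integral>\<^sup>+x. f x * indicator A x \<partial>M) \<le> (\<integral>\<^sup>+x. g x * indicator A x \<partial>M)"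
  shows "AE x in M. f x \<le> g x"
proof -
  let ?P = "\<lambda>f A. \<integral>\<^sup>+ x. f x * indicator A x \<partial>M"
  let ?N = "{x\<in>space M. g x < f x}"
  have N: "?N \<in> sets M" using borel by simp
  have "?P g ?N \<le> integral\<^sup>N M g"
    by (intro nn_integral_mono) (auto split: split_indicator)
  then have Pg_fin: "?P g ?N \<noteq> \<infinity>" using g_fin by (auto simp: top_unique)
  have "?P (\<lambda>x. (f x - g x)) ?N = (\<integral>\<^sup>+x. f x * indicator ?N x - g x * indicator ?N x \<partial>M)"
    by (auto intro!: nn_integral_cong simp: indicator_def)
  also have "\<dots> = ?P f ?N - ?P g ?N"
  proof (rule nn_integral_diff)
    show "(\<lambda>x. f x * indicator ?N x) \<in> borel_measurable M" "(\<lambda>x. g x * indicator ?N x) \<in> borel_measurable M"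
      using borel N by auto
    show "AE x in M. g x * indicator ?N x \<le> f x * indicator ?N x"
      by (auto split: split_indicator)
  qed fact
  also have "\<dots> = 0"
  proof -
    have "?P g ?N < \<top>" using Pg_fin by (simp add: less_top)
    then have "?P f ?N < \<top>" using le[OF N] by (rule le_less_trans[rotated])
    then show ?thesis using le[OF N] by (simp add: diff_eq_0_iff_ennreal)
  qed
  finally have "AE x in M. (f x - g x) * indicator ?N x = 0"
    using borel N by (subst (asm) nn_integral_0_iff_AE) auto
  with AE_space show ?thesis
  proof (eventually_elim)
    case (elim x)
    show "f x \<le> g x"
    proof (cases "g x < f x")
      case True
      then have "f x - g x = 0" using elim by (simp add: indicator_def)
      then show ?thesis by (rule ennreal_minus_eq_0)
    qed (simp add: not_less)
  qed
qed

lemma ennreal_dec_lim: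
  fixes x :: "nat \<Rightarrow> real"
  assumes "\<And>n. x (Suc n) \<le> x n" "x \<longlonglongrightarrow> L" "\<And>n. 0 \<le> x n"
  shows "ennreal L = (INF n. ennreal (x n))"
proof -
  have dx: "decseq x" using assms(1) by (simp add: decseq_Suc_iff)
  have "antimono_on UNIV (\<lambda>n. ennreal (x n))"
    by (intro monotone_onI ennreal_leI) (use dx in \<open>simp add: decseq_def\<close>)
  then have "(\<lambda>n. ennreal (x n)) \<longlonglongrightarrow> (INF n. ennreal (x n))" by (rule LIMSEQ_INF)
  moreover have "(\<lambda>n. ennreal (x n)) \<longlonglongrightarrow> ennreal L" using assms(2) by (rule tendsto_ennrealI)
  ultimately show ?thesis using LIMSEQ_unique by blast
qed

lemma emeasure_density_indicator:
  assumes "S \<in> sets M" "B \<in> sets M"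
  shows "emeasure (density M (indicator S)) B = emeasure M (S \<inter> B)"
proof -
  have "emeasure (density M (indicator S)) B = (\<integral>\<^sup>+x. indicator S x * indicator B x \<partial>M)"
    using assms by (simp add: emeasure_density)
  also have "\<dots> = (\<integral>\<^sup>+x. indicator (S \<inter> B) x \<partial>M)"
    by (intro nn_integral_cong) (simp add: indicator_inter_arith)
  also have "\<dots> = emeasure M (S \<inter> B)" using assms by simp
  finally show ?thesis .
qed

locale disint_setup =
  fixes P :: "'a measure" and MM :: "'m measure" and W :: "'a \<Rightarrow> 'm" and T :: "'a \<Rightarrow> real"
  assumes P: "prob_space P" and W: "W \<in> P \<rightarrow>\<^sub>M MM" and T: "T \<in> borel_measurable P"
begin

definition "PW = distr P MM W"
definition "Nc c = distr (density P (indicator {\<omega>\<in>space P. T \<omega> \<le> real_of_rat c})) MM W"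
definition "gc c = RN_deriv PW (Nc c)"
definition "hc c m = enn2real (gc c m)"

lemma PW_prob: "prob_space PW"
  unfolding PW_def using P W by (intro prob_space.prob_space_distr) auto

lemma sets_PW[simp]: "sets PW = sets MM" and space_PW[simp]: "space PW = space MM"
  unfolding PW_def by auto

lemma emeasure_PW: "A \<in> sets MM \<Longrightarrow> emeasure PW A = emeasure P {\<omega>\<in>space P. W \<omega> \<in> A}"
  unfolding PW_def using W by (subst emeasure_distr) (auto simp: vimage_def Int_def conj_commute)

lemma Tle_sets: "{\<omega>\<in>space P. T \<omega> \<le> x} \<in> sets P"
  using T by measurable

lemma emeasure_Nc: "A \<in> sets MM \<Longrightarrow> emeasure (Nc c) A = emeasure P {\<omega>\<in>space P. W \<omega> \<in> A \<and> T \<omega> \<le> of_rat c}"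
proof -
  assume A: "A \<in> sets MM"
  have Wd: "W \<in> density P (indicator {\<omega>\<in>space P. T \<omega> \<le> real_of_rat c}) \<rightarrow>\<^sub>M MM"
    using W by simp
  have "emeasure (Nc c) A = emeasure (density P (indicator {\<omega>\<in>space P. T \<omega> \<le> real_of_rat c})) (W -` A \<inter> space P)"
    unfolding Nc_def using Wd A by (subst emeasure_distr) auto
  also have "\<dots> = emeasure P ({\<omega>\<in>space P. T \<omega> \<le> real_of_rat c} \<inter> (W -` A \<inter> space P))"
    using A W Tle_sets by (intro emeasure_density_indicator) auto
  also have "{\<omega>\<in>space P. T \<omega> \<le> real_of_rat c} \<inter> (W -` A \<inter> space P) = {\<omega>\<in>space P. W \<omega> \<in> A \<and> T \<omega> \<le> of_rat c}"
    by auto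
  finally show ?thesis .
qed

lemma sets_Nc[simp]: "sets (Nc c) = sets MM"
  unfolding Nc_def by simp

lemma Wset': "A \<in> sets MM \<Longrightarrow> {\<omega>\<in>space P. W \<omega> \<in> A} \<in> sets P"
proof -
  assume A: "A \<in> sets MM"
  have "{\<omega>\<in>space P. W \<omega> \<in> A} = W -` A \<inter> space P" by auto
  then show ?thesis using measurable_sets[OF W A] by simp
qed

lemma Wset: "A \<in> sets MM \<Longrightarrow> {\<omega>\<in>space P. W \<omega> \<in> A \<and> T \<omega> \<le> x} \<in> sets P"
proof -
  assume A: "A \<in> sets MM"
  have "{\<omega>\<in>space P. W \<omega> \<in> A \<and> T \<omega> \<le> x} = {\<omega>\<in>space P. W \<omega> \<in> A} \<inter> {\<omega>\<in>space P. T \<omega> \<le> x}" by auto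
  then show ?thesis using Wset'[OF A] Tle_sets by simp
qed

lemma density_gc: "density PW (gc c) = Nc c"
  unfolding gc_def
proof (rule sigma_finite_measure.density_RN_deriv)
  interpret prob_space PW by (rule PW_prob)
  show "sigma_finite_measure PW" by unfold_locales
  show "sets (Nc c) = sets PW" by simp
  show "absolutely_continuous PW (Nc c)"
    unfolding absolutely_continuous_def
  proof
    fix A assume "A \<in> null_sets PW"
    then have A: "A \<in> sets MM" "emeasure PW A = 0" by auto
    have "emeasure (Nc c) A \<le> emeasure PW A"
      unfolding emeasure_Nc[OF A(1)] emeasure_PW[OF A(1)]
      using Wset'[OF A(1)] by (intro emeasure_mono) auto
    then show "A \<in> null_sets (Nc c)" using A by (auto simp: null_sets_def)
  qed
qed

lemma gc_meas_PW: "gc c \<in> borel_measurable PW"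
  unfolding gc_def by (rule borel_measurable_RN_deriv)

lemma gc_meas[measurable]: "gc c \<in> borel_measurable MM"
  using gc_meas_PW measurable_cong_sets[OF sets_PW refl] by blast

lemma int_gc: "A \<in> sets MM \<Longrightarrow> (\<integral>\<^sup>+m. gc c m * indicator A m \<partial>PW) = emeasure P {\<omega>\<in>space P. W \<omega> \<in> A \<and> T \<omega> \<le> of_rat c}"
proof -
  assume A: "A \<in> sets MM"
  have "(\<integral>\<^sup>+m. gc c m * indicator A m \<partial>PW) = emeasure (density PW (gc c)) A"
    using A gc_meas_PW by (subst emeasure_density) auto
  then show ?thesis using A by (simp add: density_gc emeasure_Nc)
qed

lemma int_one: "A \<in> sets MM \<Longrightarrow> (\<integral>\<^sup>+m. 1 * indicator A m \<partial>PW) = emeasure P {\<omega>\<in>space P. W \<omega> \<in> A}"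
  by (simp add: emeasure_PW)

lemma P_fin: "emeasure P S \<noteq> \<infinity>"
  using prob_space.emeasure_le_1[OF P, of S] by (auto simp: top_unique)

lemma AE_gc_le1: "AE m in PW. gc c m \<le> 1"
proof (rule AE_le_of_set_nn_integral_le)
  interpret prob_space PW by (rule PW_prob)
  show "gc c \<in> borel_measurable PW" by (rule gc_meas_PW)
  show "(\<lambda>_. 1) \<in> borel_measurable PW" by simp
  show "integral\<^sup>N PW (\<lambda>_. 1) \<noteq> \<infinity>" by simp
  fix A assume "A \<in> sets PW"
  then have A: "A \<in> sets MM" by simp
  show "(\<integral>\<^sup>+m. gc c m * indicator A m \<partial>PW) \<le> (\<integral>\<^sup>+m. 1 * indicator A m \<partial>PW)"
    unfolding int_gc[OF A] int_one[OF A] using Wset'[OF A] by (intro emeasure_mono) auto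
qed

lemma AE_gc_mono: "c \<le> c' \<Longrightarrow> AE m in PW. gc c m \<le> gc c' m"
proof (rule AE_le_of_set_nn_integral_le)
  assume cc: "c \<le> c'"
  show "gc c \<in> borel_measurable PW" "gc c' \<in> borel_measurable PW" by (rule gc_meas_PW)+
  have "integral\<^sup>N PW (gc c') = (\<integral>\<^sup>+m. gc c' m * indicator (space MM) m \<partial>PW)"
    by (intro nn_integral_cong) simp
  also have "\<dots> = emeasure P {\<omega>\<in>space P. W \<omega> \<in> space MM \<and> T \<omega> \<le> of_rat c'}"
    by (rule int_gc) simp
  finally show "integral\<^sup>N PW (gc c') \<noteq> \<infinity>" using P_fin by simp
  fix A assume "A \<in> sets PW"
  then have A: "A \<in> sets MM" by simp
  have "(of_rat c :: real) \<le> of_rat c'" using cc by (simp add: of_rat_less_eq)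
  then show "(\<integral>\<^sup>+m. gc c m * indicator A m \<partial>PW) \<le> (\<integral>\<^sup>+m. gc c' m * indicator A m \<partial>PW)"
    unfolding int_gc[OF A] using Wset[OF A] by (intro emeasure_mono) auto
qed

lemma gc_fin: "AE m in PW. gc c m \<noteq> \<top>"
  using AE_gc_le1[of c] by (rule eventually_mono) (auto simp: top_unique)

lemma AE_SUP: "AE m in PW. (SUP n::nat. gc (of_nat n) m) = 1"
proof -
  interpret PWp: prob_space PW by (rule PW_prob)
  have eq: "(\<integral>\<^sup>+m. (SUP n::nat. gc (of_nat n) m) * indicator A m \<partial>PW) = (\<integral>\<^sup>+m. 1 * indicator A m \<partial>PW)"
    if A: "A \<in> sets PW" for A
  proof -
    have A': "A \<in> sets MM" using A by simp
    have "(\<integral>\<^sup>+m. (SUP n::nat. gc (of_nat n) m) * indicator A m \<partial>PW) = (\<integral>\<^sup>+m. (SUP n::nat. gc (of_nat n) m * indicator A m) \<partial>PW)"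
      by (intro nn_integral_cong) (simp split: split_indicator)
    also have "\<dots> = (SUP n::nat. \<integral>\<^sup>+m. gc (of_nat n) m * indicator A m \<partial>PW)"
    proof (rule nn_integral_monotone_convergence_SUP_AE)
      fix n :: nat
      show "AE m in PW. gc (of_nat n) m * indicator A m \<le> gc (of_nat (Suc n)) m * indicator A m"
        using AE_gc_mono[of "of_nat n" "of_nat (Suc n)"] by (rule eventually_mono) (auto intro: mult_right_mono)
      show "(\<lambda>m. gc (of_nat n) m * indicator A m) \<in> borel_measurable PW"
        using gc_meas_PW A by measurable
    qed
    also have "\<dots> = (SUP n::nat. emeasure P {\<omega>\<in>space P. W \<omega> \<in> A \<and> T \<omega> \<le> real n})"
      using int_gc[OF A'] by simp
    also have "\<dots> = emeasure P (\<Union>n. {\<omega>\<in>space P. W \<omega> \<in> A \<and> T \<omega> \<le> real n})"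
    proof (rule SUP_emeasure_incseq)
      show "range (\<lambda>n. {\<omega>\<in>space P. W \<omega> \<in> A \<and> T \<omega> \<le> real n}) \<subseteq> sets P" using Wset[OF A'] by auto
      show "incseq (\<lambda>n. {\<omega>\<in>space P. W \<omega> \<in> A \<and> T \<omega> \<le> real n})"
        by (intro monoI) (auto intro: order_trans)
    qed
    also have "(\<Union>n. {\<omega>\<in>space P. W \<omega> \<in> A \<and> T \<omega> \<le> real n}) = {\<omega>\<in>space P. W \<omega> \<in> A}"
      using real_arch_simple by blast
    finally show ?thesis using int_one[OF A'] by simp
  qed
  show ?thesis
  proof (rule PWp.density_unique_finite_measure)
    show "(\<lambda>m. SUP n::nat. gc (of_nat n) m) \<in> borel_measurable PW" using gc_meas_PW by measurable
    show "(\<lambda>m. 1) \<in> borel_measurable PW" by simp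
  qed (use eq in auto)
qed

lemma AE_INF: "AE m in PW. (INF n::nat. gc (- of_nat n) m) = 0"
proof -
  have "(\<integral>\<^sup>+m. (INF n::nat. gc (- of_nat n) m) \<partial>PW) = (INF n::nat. \<integral>\<^sup>+m. gc (- of_nat n) m \<partial>PW)"
  proof (rule nn_integral_monotone_convergence_INF_AE)
    fix n :: nat
    show "AE m in PW. gc (- of_nat (Suc n)) m \<le> gc (- of_nat n) m" by (rule AE_gc_mono) simp
    show "gc (- of_nat n) \<in> borel_measurable PW" by (rule gc_meas_PW)
  next
    have "(\<integral>\<^sup>+m. gc (- of_nat 0) m \<partial>PW) = (\<integral>\<^sup>+m. gc (- of_nat 0) m * indicator (space MM) m \<partial>PW)"
      by (intro nn_integral_cong) simp
    also have "\<dots> = emeasure P {\<omega>\<in>space P. W \<omega> \<in> space MM \<and> T \<omega> \<le> of_rat (- of_nat 0)}"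
      by (rule int_gc) simp
    finally show "(\<integral>\<^sup>+m. gc (- of_nat 0) m \<partial>PW) < \<infinity>" using P_fin by (simp add: less_top)
  qed
  also have "\<dots> = (INF n::nat. emeasure P {\<omega>\<in>space P. W \<omega> \<in> space MM \<and> T \<omega> \<le> - real n})"
  proof (intro INF_cong refl)
    fix n :: nat
    have "(\<integral>\<^sup>+m. gc (- of_nat n) m \<partial>PW) = (\<integral>\<^sup>+m. gc (- of_nat n) m * indicator (space MM) m \<partial>PW)"
      by (intro nn_integral_cong) simp
    also have "\<dots> = emeasure P {\<omega>\<in>space P. W \<omega> \<in> space MM \<and> T \<omega> \<le> of_rat (- of_nat n)}"
      by (rule int_gc) simp
    finally show "(\<integral>\<^sup>+m. gc (- of_nat n) m \<partial>PW) = emeasure P {\<omega>\<in>space P. W \<omega> \<in> space MM \<and> T \<omega> \<le> - real n}"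
      by (simp add: of_rat_minus)
  qed
  also have "\<dots> = emeasure P (\<Inter>n. {\<omega>\<in>space P. W \<omega> \<in> space MM \<and> T \<omega> \<le> - real n})"
  proof (rule INF_emeasure_decseq)
    show "range (\<lambda>n. {\<omega>\<in>space P. W \<omega> \<in> space MM \<and> T \<omega> \<le> - real n}) \<subseteq> sets P" using Wset[of "space MM"] by auto
    show "antimono_on UNIV (\<lambda>n. {\<omega>\<in>space P. W \<omega> \<in> space MM \<and> T \<omega> \<le> - real n})"
      by (intro monotone_onI) (auto intro: order_trans)
    show "\<And>i. emeasure P {\<omega>\<in>space P. W \<omega> \<in> space MM \<and> T \<omega> \<le> - real i} \<noteq> \<infinity>" using P_fin by simp
  qed
  also have "(\<Inter>n. {\<omega>\<in>space P. W \<omega> \<in> space MM \<and> T \<omega> \<le> - real n}) = {}"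
  proof (rule ccontr)
    assume "(\<Inter>n. {\<omega>\<in>space P. W \<omega> \<in> space MM \<and> T \<omega> \<le> - real n}) \<noteq> {}"
    then obtain \<omega> where "\<And>n. T \<omega> \<le> - real n" by blast
    moreover obtain n where "- T \<omega> \<le> real n" using real_arch_simple by blast
    ultimately have "T \<omega> \<le> - real (Suc n)" "- T \<omega> \<le> real n" by blast+
    then show False by simp
  qed
  finally have "(\<integral>\<^sup>+m. (INF n::nat. gc (- of_nat n) m) \<partial>PW) = 0" by simp
  then show ?thesis using gc_meas_PW by (subst (asm) nn_integral_0_iff_AE) auto
qed

lemma AE_good: "AE m in PW. goodh hc m"
proof -
  have a1: "AE m in PW. \<forall>c::rat. gc c m \<le> 1"
    using AE_gc_le1 by (simp add: AE_all_countable)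
  have "AE m in PW. c \<le> c' \<longrightarrow> gc c m \<le> gc c' m" for c c' :: rat
    using AE_gc_mono[of c c'] by (cases "c \<le> c'") auto
  then have a2: "AE m in PW. \<forall>c c'::rat. c \<le> c' \<longrightarrow> gc c m \<le> gc c' m"
    by (simp add: AE_all_countable)
  show ?thesis
    using a1 a2 AE_SUP AE_INF
  proof (eventually_elim)
    case (elim m)
    have fin: "gc c m \<noteq> \<top>" for c using elim(1)[rule_format, of c] by (auto simp: top_unique)
    have ge: "gc c m = ennreal (hc c m)" for c unfolding hc_def using fin[of c] by (simp add: ennreal_enn2real less_top)
    show "goodh hc m"
      unfolding goodh_def
    proof (intro conjI allI impI)
      fix c c' :: rat assume "c \<le> c'"
      then show "hc c m \<le> hc c' m" unfolding hc_def using elim(2) fin by (intro enn2real_mono) (auto simp: less_top)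
    next
      fix c :: rat
      show "0 \<le> hc c m" unfolding hc_def by simp
      show "hc c m \<le> 1" unfolding hc_def using elim(1) enn2real_mono[of "gc c m" 1] by simp
    next
      fix k :: nat
      have "ennreal (1 - 1 / real (Suc k)) < 1" by (simp add: ennreal_lessI)
      then have "ennreal (1 - 1 / real (Suc k)) < (SUP n::nat. gc (of_nat n) m)" using elim(3) by simp
      then obtain n :: nat where "ennreal (1 - 1 / real (Suc k)) < gc (of_nat n) m" by (auto simp: less_SUP_iff)
      then have "ennreal (1 - 1 / real (Suc k)) < ennreal (hc (of_nat n) m)" using ge by simp
      then have "1 - 1 / real (Suc k) < hc (of_nat n) m" by (simp add: ennreal_less_iff)
      then show "\<exists>n::nat. 1 - 1 / real (Suc k) < hc (of_nat n) m" by blast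
    next
      fix k :: nat
      have "(INF n::nat. gc (- of_nat n) m) < ennreal (1 / real (Suc k))" using elim(4) by simp
      then obtain n :: nat where "gc (- of_nat n) m < ennreal (1 / real (Suc k))" by (auto simp: INF_less_iff)
      then have "ennreal (hc (- of_nat n) m) < ennreal (1 / real (Suc k))" using ge by simp
      then have "hc (- of_nat n) m < 1 / real (Suc k)" by (simp add: ennreal_less_iff hc_def)
      then show "\<exists>n::nat. hc (- of_nat n) m < 1 / real (Suc k)" by blast
    qed
  qed
qed

lemma hc_meas[measurable]: "hc c \<in> borel_measurable MM"
  unfolding hc_def by measurable

lemma kern_hc_meas: "kern hc \<in> MM \<rightarrow>\<^sub>M prob_algebra borel"
  by (rule kern_measurable) (rule hc_meas)

lemma int_atMost:
  assumes A: "A \<in> sets MM"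
  shows "(\<integral>\<^sup>+m. indicator A m * emeasure (kern hc m) {..t} \<partial>PW) = emeasure P {\<omega>\<in>space P. W \<omega> \<in> A \<and> T \<omega> \<le> t}"
proof -
  have afin: "AE m in PW. \<forall>c::rat. gc c m \<noteq> \<top>" using gc_fin by (simp add: AE_all_countable)
  have ae: "AE m in PW. indicator A m * emeasure (kern hc m) {..t} = (INF n. gc (rseq t n) m * indicator A m)"
    using AE_good afin
  proof (eventually_elim)
    case (elim m)
    have ge: "gc c m = ennreal (hc c m)" for c unfolding hc_def using elim(2) by (simp add: ennreal_enn2real less_top)
    have "emeasure (kern hc m) {..t} = ennreal (Fh hc m t)" by (rule kern_good[OF elim(1)])
    also have "\<dots> = (INF n. ennreal (hc (rseq t n) m))"
    proof (rule ennreal_dec_lim)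
      fix n
      show "hc (rseq t (Suc n)) m \<le> hc (rseq t n) m" using elim(1) rseq_dec unfolding goodh_def by blast
      show "0 \<le> hc (rseq t n) m" using elim(1) unfolding goodh_def by blast
    qed (rule Fh_lim[OF elim(1)])
    also have "\<dots> = (INF n. gc (rseq t n) m)" using ge by simp
    finally show ?case by (simp split: split_indicator)
  qed
  have "(\<integral>\<^sup>+m. indicator A m * emeasure (kern hc m) {..t} \<partial>PW) = (\<integral>\<^sup>+m. (INF n. gc (rseq t n) m * indicator A m) \<partial>PW)"
    by (rule nn_integral_cong_AE[OF ae])
  also have "\<dots> = (INF n. \<integral>\<^sup>+m. gc (rseq t n) m * indicator A m \<partial>PW)"
  proof (rule nn_integral_monotone_convergence_INF_AE)
    fix n
    show "AE m in PW. gc (rseq t (Suc n)) m * indicator A m \<le> gc (rseq t n) m * indicator A m"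
      using AE_gc_mono[OF rseq_dec[of t n]] by (rule eventually_mono) (auto intro: mult_right_mono)
    have AP: "A \<in> sets PW" using A by simp
    show "(\<lambda>m. gc (rseq t n) m * indicator A m) \<in> borel_measurable PW" using gc_meas_PW AP by measurable
  next
    show "(\<integral>\<^sup>+m. gc (rseq t 0) m * indicator A m \<partial>PW) < \<infinity>"
      unfolding int_gc[OF A] using P_fin by (simp add: less_top)
  qed
  also have "\<dots> = (INF n. emeasure P {\<omega>\<in>space P. W \<omega> \<in> A \<and> T \<omega> \<le> of_rat (rseq t n)})"
    using int_gc[OF A] by simp
  also have "\<dots> = emeasure P (\<Inter>n. {\<omega>\<in>space P. W \<omega> \<in> A \<and> T \<omega> \<le> of_rat (rseq t n)})"
  proof (rule INF_emeasure_decseq)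
    show "range (\<lambda>n. {\<omega>\<in>space P. W \<omega> \<in> A \<and> T \<omega> \<le> of_rat (rseq t n)}) \<subseteq> sets P" using Wset[OF A] by auto
    have "decseq (\<lambda>n. {\<omega>\<in>space P. W \<omega> \<in> A \<and> T \<omega> \<le> of_rat (rseq t n)})"
    proof (rule decseq_SucI)
      fix n
      have "(of_rat (rseq t (Suc n)) :: real) \<le> of_rat (rseq t n)" using rseq_dec by (simp add: of_rat_less_eq)
      then show "{\<omega>\<in>space P. W \<omega> \<in> A \<and> T \<omega> \<le> of_rat (rseq t (Suc n))} \<subseteq> {\<omega>\<in>space P. W \<omega> \<in> A \<and> T \<omega> \<le> of_rat (rseq t n)}"
        by auto
    qed
    then show "antimono_on UNIV (\<lambda>n. {\<omega>\<in>space P. W \<omega> \<in> A \<and> T \<omega> \<le> of_rat (rseq t n)})"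
      by (simp add: decseq_def monotone_on_def antimono_def)
    show "\<And>i. emeasure P {\<omega>\<in>space P. W \<omega> \<in> A \<and> T \<omega> \<le> of_rat (rseq t i)} \<noteq> \<infinity>" using P_fin by simp
  qed
  also have "(\<Inter>n. {\<omega>\<in>space P. W \<omega> \<in> A \<and> T \<omega> \<le> of_rat (rseq t n)}) = {\<omega>\<in>space P. W \<omega> \<in> A \<and> T \<omega> \<le> t}"
  proof
    show "{\<omega>\<in>space P. W \<omega> \<in> A \<and> T \<omega> \<le> t} \<subseteq> (\<Inter>n. {\<omega>\<in>space P. W \<omega> \<in> A \<and> T \<omega> \<le> of_rat (rseq t n)})"
    proof
      fix \<omega> assume w: "\<omega> \<in> {\<omega>\<in>space P. W \<omega> \<in> A \<and> T \<omega> \<le> t}"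
      have Tw: "T \<omega> \<le> t" using w by simp
      have "T \<omega> \<le> of_rat (rseq t n)" for n using rseq_props[of t n] Tw by linarith
      then show "\<omega> \<in> (\<Inter>n. {\<omega>\<in>space P. W \<omega> \<in> A \<and> T \<omega> \<le> of_rat (rseq t n)})" using w by simp
    qed
    show "(\<Inter>n. {\<omega>\<in>space P. W \<omega> \<in> A \<and> T \<omega> \<le> of_rat (rseq t n)}) \<subseteq> {\<omega>\<in>space P. W \<omega> \<in> A \<and> T \<omega> \<le> t}"
    proof
      fix \<omega> assume "\<omega> \<in> (\<Inter>n. {\<omega>\<in>space P. W \<omega> \<in> A \<and> T \<omega> \<le> of_rat (rseq t n)})"
      then have h: "\<omega> \<in> space P" "W \<omega> \<in> A" "\<And>n. T \<omega> \<le> of_rat (rseq t n)" by auto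
      have "T \<omega> \<le> t"
      proof (rule ccontr)
        assume "\<not> T \<omega> \<le> t"
        then have "0 < T \<omega> - t" by simp
        then obtain n where n: "inverse (real (Suc n)) < T \<omega> - t" using reals_Archimedean by blast
        have "T \<omega> < t + 1 / real (Suc n)" using h(3)[of n] rseq_props[of t n] by linarith
        then show False using n by (simp add: inverse_eq_divide)
      qed
      then show "\<omega> \<in> {\<omega>\<in>space P. W \<omega> \<in> A \<and> T \<omega> \<le> t}" using h by simp
    qed
  qed
  finally show ?thesis .
qed

end

theorem disint_real:
  fixes P :: "'a measure" and MM :: "'m measure" and W :: "'a \<Rightarrow> 'm" and T :: "'a \<Rightarrow> real"
  assumes P: "prob_space P" and W: "W \<in> P \<rightarrow>\<^sub>M MM" and T: "T \<in> borel_measurable P"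
  shows "\<exists>k. cond_distr P MM borel W T k"
proof -
  interpret disint_setup P MM W T by (intro disint_setup.intro P W T)
  interpret Pp: prob_space P by (rule P)
  define k where "k = kern hc"
  have km: "k \<in> MM \<rightarrow>\<^sub>M prob_algebra borel" unfolding k_def by (rule kern_hc_meas)
  have ksub: "k \<in> MM \<rightarrow>\<^sub>M subprob_algebra borel" using km by (rule measurable_prob_algebraD)
  have neMM: "space MM \<noteq> {}"
  proof -
    obtain \<omega> where "\<omega> \<in> space P" using Pp.not_empty by blast
    then show ?thesis using measurable_space[OF W] by blast
  qed
  have eq: "emeasure P {\<omega>\<in>space P. W \<omega> \<in> A \<and> T \<omega> \<in> B} = (\<integral>\<^sup>+x. indicator A x * emeasure (k x) B \<partial>PW)"
    if A: "A \<in> sets MM" and B: "B \<in> sets borel" for A B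
  proof -
    define SA where "SA = {\<omega>\<in>space P. W \<omega> \<in> A}"
    have SA: "SA \<in> sets P" unfolding SA_def using Wset'[OF A] .
    define \<mu>1 where "\<mu>1 = distr (density P (indicator SA)) borel T"
    define DA where "DA = density PW (indicator A)"
    define \<mu>2 where "\<mu>2 = DA \<bind> k"
    have spDA: "space DA \<noteq> {}" unfolding DA_def using neMM by simp
    have ePW: "PW \<rightarrow>\<^sub>M subprob_algebra borel = MM \<rightarrow>\<^sub>M subprob_algebra borel"
      by (rule measurable_cong_sets) simp_all
    have kPW: "k \<in> PW \<rightarrow>\<^sub>M subprob_algebra borel"
      unfolding ePW by (rule ksub)
    have eDA: "DA \<rightarrow>\<^sub>M subprob_algebra borel = PW \<rightarrow>\<^sub>M subprob_algebra borel"
      by (rule measurable_cong_sets) (simp_all add: DA_def)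
    have kDA: "k \<in> DA \<rightarrow>\<^sub>M subprob_algebra borel"
      unfolding eDA by (rule kPW)
    have Td: "T \<in> density P (indicator SA) \<rightarrow>\<^sub>M borel" using T by simp
    have e1: "emeasure \<mu>1 C = emeasure P {\<omega>\<in>space P. W \<omega> \<in> A \<and> T \<omega> \<in> C}" if C: "C \<in> sets borel" for C
    proof -
      have "emeasure \<mu>1 C = emeasure (density P (indicator SA)) (T -` C \<inter> space P)"
        unfolding \<mu>1_def using Td C by (subst emeasure_distr) auto
      also have "\<dots> = emeasure P (SA \<inter> (T -` C \<inter> space P))"
        using SA measurable_sets[OF T C] by (intro emeasure_density_indicator) auto
      also have "SA \<inter> (T -` C \<inter> space P) = {\<omega>\<in>space P. W \<omega> \<in> A \<and> T \<omega> \<in> C}" unfolding SA_def by auto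
      finally show ?thesis .
    qed
    have e2: "emeasure \<mu>2 C = (\<integral>\<^sup>+x. indicator A x * emeasure (k x) C \<partial>PW)" if C: "C \<in> sets borel" for C
    proof -
      have "emeasure \<mu>2 C = (\<integral>\<^sup>+x. emeasure (k x) C \<partial>DA)"
        unfolding \<mu>2_def using spDA kDA C by (rule emeasure_bind)
      also have "\<dots> = (\<integral>\<^sup>+x. indicator A x * emeasure (k x) C \<partial>PW)"
        unfolding DA_def
      proof (rule nn_integral_density)
        show "indicator A \<in> borel_measurable PW" by (rule borel_measurable_indicator) (simp add: A)
        have "(\<lambda>x. emeasure (k x) C) \<in> borel_measurable MM"
          using measurable_compose[OF ksub measurable_emeasure_subprob_algebra[OF C]] by (simp add: o_def)
        moreover have "PW \<rightarrow>\<^sub>M (borel :: ennreal measure) = MM \<rightarrow>\<^sub>M borel"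
          by (rule measurable_cong_sets) simp_all
        ultimately show "(\<lambda>x. emeasure (k x) C) \<in> borel_measurable PW" by simp
      qed
      finally show ?thesis .
    qed
    have sets1: "sets \<mu>1 = sets borel" unfolding \<mu>1_def by simp
    have skx: "sets (k x) = sets borel" if "x \<in> space DA" for x
      using measurable_space[OF km, of x] that by (simp add: DA_def space_prob_algebra)
    have sets2: "sets \<mu>2 = sets borel" unfolding \<mu>2_def using sets_bind[OF skx spDA] .
    have fin1: "finite_measure \<mu>1"
    proof (rule finite_measureI)
      have "space \<mu>1 = UNIV" unfolding \<mu>1_def by simp
      then show "emeasure \<mu>1 (space \<mu>1) \<noteq> \<infinity>" using e1[of UNIV] P_fin by simp
    qed
    have fin2: "finite_measure \<mu>2"
    proof (rule finite_measureI)
      have sp: "space \<mu>2 = UNIV" using sets_eq_imp_space_eq[OF sets2] by simp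
      have "emeasure \<mu>2 UNIV = (\<integral>\<^sup>+x. indicator A x * emeasure (k x) UNIV \<partial>PW)" using e2[of UNIV] by simp
      also have "\<dots> \<le> (\<integral>\<^sup>+x. 1 \<partial>PW)"
      proof (intro nn_integral_mono)
        fix x assume "x \<in> space PW"
        then have "prob_space (k x)" using measurable_space[OF km] by (simp add: space_prob_algebra)
        then have "emeasure (k x) UNIV \<le> 1" using prob_space.emeasure_le_1 by blast
        then show "indicator A x * emeasure (k x) UNIV \<le> 1" by (simp split: split_indicator)
      qed
      also have "\<dots> < \<infinity>" using prob_space.emeasure_space_1[OF PW_prob] by simp
      finally show "emeasure \<mu>2 (space \<mu>2) \<noteq> \<infinity>" using sp by simp
    qed
    have "\<mu>1 = \<mu>2"
    proof (rule cdf_unique')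
      show "finite_borel_measure \<mu>1" using fin1 sets1 by (simp add: finite_borel_measure_def finite_borel_measure_axioms_def)
      show "finite_borel_measure \<mu>2" using fin2 sets2 by (simp add: finite_borel_measure_def finite_borel_measure_axioms_def)
      show "cdf \<mu>1 = cdf \<mu>2"
      proof
        fix t
        have "emeasure \<mu>1 {..t} = emeasure \<mu>2 {..t}"
          unfolding e1[of "{..t}", simplified] e2[of "{..t}", simplified] k_def using int_atMost[OF A, of t] by simp
        then show "cdf \<mu>1 t = cdf \<mu>2 t" unfolding cdf_def by (simp add: measure_def)
      qed
    qed
    then show ?thesis using e1[OF B] e2[OF B] by simp
  qed
  show ?thesis
    unfolding cond_distr_def using km eq unfolding PW_def by blast
qed

lemma disint_retr:
  fixes P :: "'a measure" and MM :: "'m measure" and X :: "'x measure"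
  assumes P: "prob_space P" and W: "W \<in> P \<rightarrow>\<^sub>M MM" and Z: "Z \<in> P \<rightarrow>\<^sub>M X"
    and R: "retr X (borel :: real measure)"
  shows "\<exists>k. cond_distr P MM X W Z k"
proof -
  obtain iX :: "'x \<Rightarrow> real" and rX where ir: "iX \<in> X \<rightarrow>\<^sub>M borel" "rX \<in> borel \<rightarrow>\<^sub>M X"
    "\<And>x. x \<in> space X \<Longrightarrow> rX (iX x) = x"
    using R unfolding retr_def by blast
  define T where "T \<omega> = iX (Z \<omega>)" for \<omega>
  have T: "T \<in> borel_measurable P" unfolding T_def using ir(1) Z by measurable
  obtain k' where k': "cond_distr P MM borel W T k'" using disint_real[OF P W T] by blast
  have k'm: "k' \<in> MM \<rightarrow>\<^sub>M prob_algebra borel" using k' unfolding cond_distr_def by blast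
  define k where "k m = distr (k' m) X rX" for m
  have km: "k \<in> MM \<rightarrow>\<^sub>M prob_algebra X"
    unfolding k_def using measurable_compose[OF k'm measurable_distr_prob_space[OF ir(2)]] by (simp add: o_def)
  have "emeasure P {\<omega> \<in> space P. W \<omega> \<in> A \<and> Z \<omega> \<in> B} = (\<integral>\<^sup>+ m. indicator A m * emeasure (k m) B \<partial>distr P MM W)"
    if A: "A \<in> sets MM" and B: "B \<in> sets X" for A B
  proof -
    have B': "rX -` B \<inter> space borel \<in> sets borel" using measurable_sets[OF ir(2) B] .
    have "{\<omega> \<in> space P. W \<omega> \<in> A \<and> Z \<omega> \<in> B} = {\<omega> \<in> space P. W \<omega> \<in> A \<and> T \<omega> \<in> rX -` B \<inter> space borel}"
      using measurable_space[OF Z] ir(3) unfolding T_def by auto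
    moreover have "emeasure P {\<omega> \<in> space P. W \<omega> \<in> A \<and> T \<omega> \<in> rX -` B \<inter> space borel}
        = (\<integral>\<^sup>+ m. indicator A m * emeasure (k' m) (rX -` B \<inter> space borel) \<partial>distr P MM W)"
      using k' A B' unfolding cond_distr_def by blast
    ultimately have "emeasure P {\<omega> \<in> space P. W \<omega> \<in> A \<and> Z \<omega> \<in> B}
        = (\<integral>\<^sup>+ m. indicator A m * emeasure (k' m) (rX -` B \<inter> space borel) \<partial>distr P MM W)"
      by simp
    also have "\<dots> = (\<integral>\<^sup>+ m. indicator A m * emeasure (k m) B \<partial>distr P MM W)"
    proof (intro nn_integral_cong)
      fix m assume "m \<in> space (distr P MM W)"
      then have "m \<in> space MM" by simp
      then have "sets (k' m) = sets borel" using measurable_space[OF k'm] by (simp add: space_prob_algebra)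
      then have rXm: "rX \<in> k' m \<rightarrow>\<^sub>M X" using ir(2) measurable_cong_sets[of "k' m" borel X X] by simp
      have sp: "space (k' m) = space borel" using \<open>sets (k' m) = sets borel\<close> by (rule sets_eq_imp_space_eq)
      have "emeasure (k m) B = emeasure (k' m) (rX -` B \<inter> space (k' m))"
        unfolding k_def using rXm B by (rule emeasure_distr)
      then show "indicator A m * emeasure (k' m) (rX -` B \<inter> space borel) = indicator A m * emeasure (k m) B"
        using sp by simp
    qed
    finally show ?thesis .
  qed
  then show ?thesis unfolding cond_distr_def using km by blast
qed

lemma standard_borel_retr_real:
  assumes "standard_borel X" "space X \<noteq> {}"
  shows "retr X (borel :: real measure)"
  using retr_trans[OF standard_borel_retr[OF assms] retr_seq_real] .

theorem corollary3p6:
  fixes P :: "'a measure"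
    and MS :: "'s measure" and MV :: "'v measure" and MY :: "'y measure" and MM :: "'m measure"
    and G :: "('g, 'b) monoid_scheme" and TG :: "'g topology"
    and \<phi> :: "'g \<Rightarrow> ('s \<times> 'v) \<Rightarrow> ('s \<times> 'v)"
    and S :: "'a \<Rightarrow> 's" and V :: "'a \<Rightarrow> 'v" and Y :: "'a \<Rightarrow> 'y"
    and \<kappa> :: "('s \<times> 'v) \<Rightarrow> 'y measure"
    and M :: "('s \<times> 'v) \<Rightarrow> 'm"
  assumes "prob_space P"
    and "standard_borel MS" and "standard_borel MV" and "standard_borel MY"
    and "standard_borel MM"
    and "compact_topological_group G TG"
    and "measurable_group_action G TG (MS \<Otimes>\<^sub>M MV) \<phi>"
    and "S \<in> measurable P MS" and "V \<in> measurable P MV" and "Y \<in> measurable P MY"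
    and "cond_distr P (MS \<Otimes>\<^sub>M MV) MY (\<lambda>\<omega>. (S \<omega>, V \<omega>)) Y \<kappa>"
    and "G_invariant_kernel G (MS \<Otimes>\<^sub>M MV) \<phi> \<kappa>"
    and "invariant_sufficient_rep G (MS \<Otimes>\<^sub>M MV) MM \<phi> M"
  shows "adequate_statistic P (MS \<Otimes>\<^sub>M MV) MY MM (\<lambda>\<omega>. (S \<omega>, V \<omega>)) Y \<kappa> M"
proof -
  note P = assms(1) and sbS = assms(2) and sbV = assms(3) and sbY = assms(4) and sbM = assms(5)
  note Sm = assms(8) and Vm = assms(9) and Ym = assms(10) and kap = assms(11)
  note inv = assms(12) and isr = assms(13)
  interpret Pp: prob_space P by (rule P)
  define X where "X = MS \<Otimes>\<^sub>M MV"
  define Z where "Z = (\<lambda>\<omega>. (S \<omega>, V \<omega>))"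
  obtain \<omega>0 where \<omega>0: "\<omega>0 \<in> space P" using Pp.not_empty by blast
  have Zm: "Z \<in> P \<rightarrow>\<^sub>M X" unfolding Z_def X_def using Sm Vm by measurable
  have kapZ: "cond_distr P X MY Z Y \<kappa>" using kap unfolding X_def Z_def .
  have Mm: "M \<in> X \<rightarrow>\<^sub>M MM" using isr unfolding invariant_sufficient_rep_def X_def by blast
  have neS: "space MS \<noteq> {}" using measurable_space[OF Sm \<omega>0] by blast
  have neV: "space MV \<noteq> {}" using measurable_space[OF Vm \<omega>0] by blast
  have neY: "space MY \<noteq> {}" using measurable_space[OF Ym \<omega>0] by blast
  have neM: "space MM \<noteq> {}" using measurable_space[OF Mm measurable_space[OF Zm \<omega>0]] by blast
  have rS: "retr MS (borel :: real measure)" by (rule standard_borel_retr_real[OF sbS neS])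
  have rV: "retr MV (borel :: real measure)" by (rule standard_borel_retr_real[OF sbV neV])
  have rY: "retr MY (borel :: real measure)" by (rule standard_borel_retr_real[OF sbY neY])
  have rM: "retr MM (borel :: real measure)" by (rule standard_borel_retr_real[OF sbM neM])
  have rX: "retr X (borel :: real measure)"
    unfolding X_def using retr_trans[OF retr_pair[OF rS rV] retr_pair_real] .
  have MZ: "(\<lambda>\<omega>. M (Z \<omega>)) \<in> P \<rightarrow>\<^sub>M MM" using Mm Zm by measurable
  have suff: "sufficient_statistic P X MM Z M"
    unfolding sufficient_statistic_def using Mm disint_retr[OF P MZ Zm rX] by blast
  have km: "\<kappa> \<in> X \<rightarrow>\<^sub>M prob_algebra MY" using kapZ unfolding cond_distr_def by blast
  have kinv: "\<kappa> x = \<kappa> y" if "x \<in> space X" "y \<in> space X" "M x = M y" for x y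
  proof -
    have iff: "\<forall>x1\<in>space X. \<forall>x2\<in>space X. M x1 = M x2 \<longleftrightarrow> (\<exists>g\<in>carrier G. x2 = \<phi> g x1)"
      using isr unfolding invariant_sufficient_rep_def X_def by (rule conjunct2)
    have "\<exists>g\<in>carrier G. y = \<phi> g x" using iff[rule_format, OF that(1) that(2)] that(3) by simp
    then obtain g where g: "g \<in> carrier G" "y = \<phi> g x" by blast
    have inv': "\<forall>g\<in>carrier G. \<forall>x\<in>space X. \<kappa> x = \<kappa> (\<phi> g x)"
      using inv unfolding G_invariant_kernel_def X_def .
    have "\<kappa> x = \<kappa> (\<phi> g x)" using inv'[rule_format, OF g(1) that(1)] .
    then show ?thesis using g(2) by simp
  qed
  obtain iY :: "'y \<Rightarrow> real" and rrY where iY: "iY \<in> MY \<rightarrow>\<^sub>M borel" "rrY \<in> borel \<rightarrow>\<^sub>M MY"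
    "\<And>y. y \<in> space MY \<Longrightarrow> rrY (iY y) = y"
    using rY unfolding retr_def by blast
  define f where "f c x = measure (\<kappa> x) (iY -` {..of_rat c} \<inter> space MY)" for c x
  have fm: "f c \<in> borel_measurable X" for c
  proof -
    have St: "iY -` {..of_rat c} \<inter> space MY \<in> sets MY" using measurable_sets[OF iY(1)] by simp
    have "(\<lambda>x. emeasure (\<kappa> x) (iY -` {..of_rat c} \<inter> space MY)) \<in> borel_measurable X"
      using measurable_compose[OF measurable_prob_algebraD[OF km] measurable_emeasure_subprob_algebra[OF St]]
      by (simp add: o_def)
    then show ?thesis unfolding f_def measure_def by (rule borel_measurable_enn2real)
  qed
  have "\<forall>c. \<exists>h. h \<in> borel_measurable MM \<and> (\<forall>x\<in>space X. f c x = h (M x))"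
  proof
    fix c
    have "\<exists>h\<in>borel_measurable MM. \<forall>x\<in>space X. f c x = h (M x)"
    proof (rule factor_invariant[OF rX rM Mm fm])
      fix x y assume "x \<in> space X" "y \<in> space X" "M x = M y"
      then have "\<kappa> x = \<kappa> y" by (rule kinv)
      then show "f c x = f c y" unfolding f_def by simp
    qed
    then show "\<exists>h. h \<in> borel_measurable MM \<and> (\<forall>x\<in>space X. f c x = h (M x))" by blast
  qed
  from choice[OF this] obtain H where H': "\<forall>c. H c \<in> borel_measurable MM \<and> (\<forall>x\<in>space X. f c x = H c (M x))"
    by blast
  have H: "\<And>c. H c \<in> borel_measurable MM" "\<And>c x. x \<in> space X \<Longrightarrow> f c x = H c (M x)"
    using H' by auto
  have kprob: "prob_space (\<kappa> x)" "sets (\<kappa> x) = sets MY" if "x \<in> space X" for x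
    using measurable_space[OF km that] by (auto simp: space_prob_algebra)
  have kern_eq: "kern H (M x) = distr (\<kappa> x) borel iY" if x: "x \<in> space X" for x
  proof (rule kern_cdf(2))
    have iYk: "iY \<in> \<kappa> x \<rightarrow>\<^sub>M borel" using iY(1) measurable_cong_sets[OF kprob(2)[OF x] refl] by blast
    show "real_distribution (distr (\<kappa> x) borel iY)"
      unfolding real_distribution_def real_distribution_axioms_def
      using prob_space.prob_space_distr[OF kprob(1)[OF x] iYk] by simp
    fix c
    have sp: "space (\<kappa> x) = space MY" using sets_eq_imp_space_eq[OF kprob(2)[OF x]] .
    have "cdf (distr (\<kappa> x) borel iY) (of_rat c) = measure (\<kappa> x) (iY -` {..of_rat c} \<inter> space (\<kappa> x))"
      unfolding cdf_def using iYk by (simp add: measure_distr)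
    also have "\<dots> = H c (M x)" using H(2)[OF x, of c] sp by (simp add: f_def)
    finally show "H c (M x) = cdf (distr (\<kappa> x) borel iY) (of_rat c)" by simp
  qed
  define q where "q m = distr (kern H m) MY rrY" for m
  have qm: "q \<in> MM \<rightarrow>\<^sub>M prob_algebra MY"
    unfolding q_def using measurable_compose[OF kern_measurable[OF H(1)] measurable_distr_prob_space[OF iY(2)]]
    by (simp add: o_def)
  have qM: "q (M x) = \<kappa> x" if x: "x \<in> space X" for x
  proof -
    have iYk: "iY \<in> \<kappa> x \<rightarrow>\<^sub>M borel" using iY(1) measurable_cong_sets[OF kprob(2)[OF x] refl] by blast
    have "q (M x) = distr (distr (\<kappa> x) borel iY) MY rrY" unfolding q_def kern_eq[OF x] ..
    also have "\<dots> = distr (\<kappa> x) MY (rrY \<circ> iY)" by (rule distr_distr[OF iY(2) iYk])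
    also have "\<dots> = distr (\<kappa> x) MY (\<lambda>y. y)"
      using sets_eq_imp_space_eq[OF kprob(2)[OF x]] iY(3) by (intro distr_cong) auto
    also have "\<dots> = \<kappa> x" by (rule distr_id2[OF kprob(2)[OF x, symmetric]])
    finally show ?thesis .
  qed
  have qcond: "cond_distr P MM MY (\<lambda>\<omega>. M (Z \<omega>)) Y q"
    unfolding cond_distr_def
  proof (intro conjI qm ballI)
    fix A B assume A: "A \<in> sets MM" and B: "B \<in> sets MY"
    have MA: "M -` A \<inter> space X \<in> sets X" using measurable_sets[OF Mm A] .
    have "{\<omega> \<in> space P. M (Z \<omega>) \<in> A \<and> Y \<omega> \<in> B} = {\<omega> \<in> space P. Z \<omega> \<in> M -` A \<inter> space X \<and> Y \<omega> \<in> B}"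
      using measurable_space[OF Zm] by auto
    moreover have "emeasure P {\<omega> \<in> space P. Z \<omega> \<in> M -` A \<inter> space X \<and> Y \<omega> \<in> B}
        = (\<integral>\<^sup>+ x. indicator (M -` A \<inter> space X) x * emeasure (\<kappa> x) B \<partial>distr P X Z)"
      using kapZ MA B unfolding cond_distr_def by blast
    ultimately have "emeasure P {\<omega> \<in> space P. M (Z \<omega>) \<in> A \<and> Y \<omega> \<in> B}
        = (\<integral>\<^sup>+ x. indicator (M -` A \<inter> space X) x * emeasure (\<kappa> x) B \<partial>distr P X Z)"
      by simp
    also have "\<dots> = (\<integral>\<^sup>+ x. indicator A (M x) * emeasure (q (M x)) B \<partial>distr P X Z)"
      by (intro nn_integral_cong) (simp add: qM split: split_indicator)
    also have "\<dots> = (\<integral>\<^sup>+ m. indicator A m * emeasure (q m) B \<partial>distr (distr P X Z) MM M)"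
    proof -
      have MD: "M \<in> distr P X Z \<rightarrow>\<^sub>M MM" using Mm by simp
      have "(\<lambda>m. emeasure (q m) B) \<in> borel_measurable MM"
        using measurable_compose[OF measurable_prob_algebraD[OF qm] measurable_emeasure_subprob_algebra[OF B]]
        by (simp add: o_def)
      then have fmeas: "(\<lambda>m. indicator A m * emeasure (q m) B) \<in> borel_measurable MM" using A by measurable
      have fmeas': "(\<lambda>m. indicator A m * emeasure (q m) B) \<in> borel_measurable (distr (distr P X Z) MM M)"
        unfolding measurable_distr_eq1 by (rule fmeas)
      show ?thesis using nn_integral_distr[OF MD fmeas'] by simp
    qed
    also have "distr (distr P X Z) MM M = distr P MM (\<lambda>\<omega>. M (Z \<omega>))"
      using distr_distr[OF Mm Zm] by (simp add: o_def)
    finally show "emeasure P {\<omega> \<in> space P. M (Z \<omega>) \<in> A \<and> Y \<omega> \<in> B}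
        = (\<integral>\<^sup>+ m. indicator A m * emeasure (q m) B \<partial>distr P MM (\<lambda>\<omega>. M (Z \<omega>)))" .
  qed
  have "\<forall>z\<in>space X. \<kappa> z = q (M z)" using qM by simp
  then have "adequate_statistic P X MY MM Z Y \<kappa> M"
    unfolding adequate_statistic_def using suff qcond by blast
  then show ?thesis unfolding X_def Z_def .
qed

end
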